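(* In the setting described in the context, almost surely $\lim_{n\to\infty}\sup_{t\in[0,T]}\lVert x^n(t)-\hat x(T_n+t)\rVert=0$.
   Context: Setting. $S$ is a compact metric space; $h:\mathbb{R}^d\times S\to\mathbb{R}^d$ is jointly continuous and there is $L>0$ with $\lVert h(x_1,y)-h(x_2,y)\rVert\le L\lVert x_1-x_2\rVert$ for all $x_1,x_2,y$. Step sizes $a(n)>0$ satisfy $\sum_n a(n)=\infty$, $\sum_n a(n)^2<\infty$, $\sup_n a(n)\le1$. On a probability space with filtration $\{\mathcal{F}_n\}$, $\{y_n\}_{n\ge0}$ is an $S$-valued adapted process, $x_0$ is $\mathcal{F}_0$-measurable, $\{M_n\}_{n\ge1}$ is a square-integrable martingale difference sequence with $E[\lVert M_{n+1}\rVert^2\mid\mathcal{F}_n]\le K(1+\lVert x_n\rVert^2)$, and $x_{n+1}=x_n+a(n)[h(x_n,y_n)+M_{n+1}]$. For $c\ge1$, $h_c(x,y):=h(cx,y)/c$. Rescaling. Fix $T>0$. Let $t(0)=0$, $t(n)=\sum_{i=0}^{n-1}a(i)$; $\bar x$ the piecewise linear interpolation with $\bar x(t(n))=x_n$. Let $T_0=0$, $T_n=\min\{t(m):t(m)\ge T_{n-1}+T\}$, $r(n)=\lVert\bar x(T_n)\rVert\vee1$; for $t\in[T_n,T_{n+1})$, $\hat x(t)=\bar x(t)/r(n)$, and $\hat x(T_{n+1}^-):=\lim_{t\uparrow T_{n+1}}\hat x(t)$ (this left limit is used in place of $\hat x(T_{n+1})$ when $T_n+t=T_{n+1}$). For $t\in[t(m),t(m+1))$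 with $T_n\le t(m)<t(m+1)\le T_{n+1}$, let $\hat z(t)=h_{r(n)}(\hat x(t(m)),y_m)$. Let $x^n(t)=\hat x(T_n)+\int_0^t\hat z(T_n+s)\,ds$ for $t\in[0,T]$. *)

theory Defs
  imports "HOL-Analysis.Analysis" "HOL-Probability.Probability"
begin

definition filtration :: "'a measure \<Rightarrow> (nat \<Rightarrow> 'a measure) \<Rightarrow> bool" where
  "filtration M F \<longleftrightarrow> (\<forall>n. subalgebra M (F n)) \<and> (\<forall>m n. m \<le> n \<longrightarrow> sets (F m) \<subseteq> sets (F n))"

definition tt :: "(nat \<Rightarrow> real) \<Rightarrow> nat \<Rightarrow> real" where
  "tt a n = (\<Sum>i<n. a i)"

text \<open>index m with t(m) <= t < t(m+1) (for t >= 0)\<close>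
definition idx :: "(nat \<Rightarrow> real) \<Rightarrow> real \<Rightarrow> nat" where
  "idx a t = (LEAST m. t < tt a (Suc m))"

definition xbar :: "(nat \<Rightarrow> real) \<Rightarrow> (nat \<Rightarrow> 'b::real_normed_vector) \<Rightarrow> real \<Rightarrow> 'b" where
  "xbar a x t = (let m = idx a t in x m + ((t - tt a m) / a m) *\<^sub>R (x (Suc m) - x m))"

primrec Nidx :: "(nat \<Rightarrow> real) \<Rightarrow> real \<Rightarrow> nat \<Rightarrow> nat" where
  "Nidx a T 0 = 0"
| "Nidx a T (Suc n) = (LEAST m. tt a (Nidx a T n) + T \<le> tt a m)"

definition Tn :: "(nat \<Rightarrow> real) \<Rightarrow> real \<Rightarrow> nat \<Rightarrow> real" where
  "Tn a T n = tt a (Nidx a T n)"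

definition rr :: "(nat \<Rightarrow> real) \<Rightarrow> real \<Rightarrow> (nat \<Rightarrow> 'b::real_normed_vector) \<Rightarrow> nat \<Rightarrow> real" where
  "rr a T x n = max (norm (xbar a x (Tn a T n))) 1"

text \<open>block index n with T_n <= t < T_{n+1}\<close>
definition blk :: "(nat \<Rightarrow> real) \<Rightarrow> real \<Rightarrow> real \<Rightarrow> nat" where
  "blk a T t = (LEAST n. t < Tn a T (Suc n))"

definition xhat :: "(nat \<Rightarrow> real) \<Rightarrow> real \<Rightarrow> (nat \<Rightarrow> 'b::real_normed_vector) \<Rightarrow> real \<Rightarrow> 'b" where
  "xhat a T x t = xbar a x t /\<^sub>R rr a T x (blk a T t)"

definition hc :: "('b::real_normed_vector \<Rightarrow> 'c \<Rightarrow> 'b) \<Rightarrow> real \<Rightarrow> 'b \<Rightarrow> 'c \<Rightarrow> 'b" where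
  "hc h c x y = h (c *\<^sub>R x) y /\<^sub>R c"

definition zhat :: "('b::real_normed_vector \<Rightarrow> 'c \<Rightarrow> 'b) \<Rightarrow> (nat \<Rightarrow> real) \<Rightarrow> real \<Rightarrow>
    (nat \<Rightarrow> 'b) \<Rightarrow> (nat \<Rightarrow> 'c) \<Rightarrow> real \<Rightarrow> 'b" where
  "zhat h a T x y t = (let m = idx a t; n = blk a T t in
      hc h (rr a T x n) (xhat a T x (tt a m)) (y m))"

definition xn :: "('b::euclidean_space \<Rightarrow> 'c \<Rightarrow> 'b) \<Rightarrow> (nat \<Rightarrow> real) \<Rightarrow> real \<Rightarrow>
    (nat \<Rightarrow> 'b) \<Rightarrow> (nat \<Rightarrow> 'c) \<Rightarrow> nat \<Rightarrow> real \<Rightarrow> 'b" where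
  "xn h a T x y n t = xhat a T x (Tn a T n) + integral {0..t} (\<lambda>s. zhat h a T x y (Tn a T n + s))"

definition xhat_blk :: "(nat \<Rightarrow> real) \<Rightarrow> real \<Rightarrow> (nat \<Rightarrow> 'b::real_normed_vector) \<Rightarrow> nat \<Rightarrow> real \<Rightarrow> 'b" where
  "xhat_blk a T x n t = (if Tn a T n + t = Tn a T (Suc n)
      then Lim (at_left (Tn a T (Suc n))) (xhat a T x)
      else xhat a T x (Tn a T n + t))"

end

theory Submission
  imports Defs
begin


locale stepsz =
  fixes a :: "nat \<Rightarrow> real" and T :: real
  assumes a_pos: "\<And>n. a n > 0" and a_div: "\<not> summable a" and a_le1: "\<And>n. a n \<le> 1"
    and T_pos: "T > 0"
begin

declare Nidx.simps(2)[simp del]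

lemma tt_0[simp]: "tt a 0 = 0" by (simp add: tt_def)
lemma tt_Suc: "tt a (Suc n) = tt a n + a n" by (simp add: tt_def)

lemma tt_strict: "m < n \<Longrightarrow> tt a m < tt a n"
proof (induction n)
  case (Suc n) then show ?case using a_pos[of n] by (cases "m = n") (auto simp: tt_Suc)
qed simp

lemma tt_mono: "m \<le> n \<Longrightarrow> tt a m \<le> tt a n"
  using tt_strict by (cases "m = n") (auto simp: less_le)

lemma tt_less_iff[simp]: "tt a m < tt a n \<longleftrightarrow> m < n"
  by (metis not_less tt_mono tt_strict)

lemma tt_le_iff[simp]: "tt a m \<le> tt a n \<longleftrightarrow> m \<le> n"
  by (meson not_le tt_less_iff)

lemma tt_nonneg: "tt a n \<ge> 0" using tt_mono[of 0 n] by simp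

lemma tt_unbounded: "\<exists>n. B < tt a n"
proof (rule ccontr)
  assume "\<not> ?thesis"
  then have "\<And>n. tt a n \<le> B" by (simp add: not_less)
  then have "summable a"
    by (intro summableI_nonneg_bounded[where x=B]) (auto simp: tt_def less_imp_le[OF a_pos])
  with a_div show False by simp
qed

lemma idx_eq:
  assumes "tt a m \<le> t" "t < tt a (Suc m)"
  shows "idx a t = m"
  unfolding idx_def
proof (rule Least_equality)
  show "t < tt a (Suc m)" by fact
  fix k assume "t < tt a (Suc k)"
  then have "tt a m < tt a (Suc k)" using assms by linarith
  then show "m \<le> k" using tt_less_iff[of m "Suc k"] by simp
qed

lemma idx_exists:
  assumes "0 \<le> t" shows "\<exists>m. tt a m \<le> t \<and> t < tt a (Suc m)"
proof -
  obtain n where n: "t < tt a n" using tt_unbounded by blast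
  define m where "m = (LEAST m. t < tt a m)"
  have m1: "t < tt a m" unfolding m_def by (rule LeastI[of _ n]) (rule n)
  have "m \<noteq> 0" using m1 assms by (cases m) auto
  then obtain k where k: "m = Suc k" by (cases m) auto
  have "\<not> t < tt a k" using Least_le[of "\<lambda>m. t < tt a m" k] k unfolding m_def[symmetric] by auto
  then show ?thesis using m1 k by (metis not_less)
qed

lemma idx_props:
  assumes "0 \<le> t" shows "tt a (idx a t) \<le> t" "t < tt a (Suc (idx a t))"
  using idx_exists[OF assms] idx_eq by auto

lemma xbar_tt: "xbar a X (tt a m) = X m"
  using idx_eq[of m "tt a m"] a_pos[of m] by (simp add: xbar_def Let_def tt_Suc)

lemma Nidx_Suc_props:
  "tt a (Nidx a T n) + T \<le> tt a (Nidx a T (Suc n))"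
  "Nidx a T n < Nidx a T (Suc n)"
  "tt a (Nidx a T (Suc n)) < tt a (Nidx a T n) + T + 1"
proof -
  let ?P = "\<lambda>m. tt a (Nidx a T n) + T \<le> tt a m"
  obtain k where k: "tt a (Nidx a T n) + T < tt a k" using tt_unbounded by blast
  have P: "?P (Nidx a T (Suc n))" unfolding Nidx.simps(2) by (rule LeastI[of ?P k], use k in auto)
  then show "tt a (Nidx a T n) + T \<le> tt a (Nidx a T (Suc n))" .
  then show lt: "Nidx a T n < Nidx a T (Suc n)" using T_pos
    by (metis less_add_same_cancel1 order_less_le_trans tt_less_iff)
  then obtain j where j: "Nidx a T (Suc n) = Suc j" by (cases "Nidx a T (Suc n)") auto
  have "\<not> ?P j"
  proof
    assume "?P j"
    then have "Nidx a T (Suc n) \<le> j" unfolding Nidx.simps(2) by (simp add: Least_le)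
    with j show False by simp
  qed
  then show "tt a (Nidx a T (Suc n)) < tt a (Nidx a T n) + T + 1"
    using j a_le1[of j] by (simp add: tt_Suc)
qed

lemma Tn_0[simp]: "Tn a T 0 = 0" by (simp add: Tn_def)

lemma Nidx_strict: "m < n \<Longrightarrow> Nidx a T m < Nidx a T n"
proof (induction n)
  case (Suc n) then show ?case using Nidx_Suc_props(2)[of n] by (cases "m = n") auto
qed simp

lemma Nidx_mono: "m \<le> n \<Longrightarrow> Nidx a T m \<le> Nidx a T n"
  using Nidx_strict by (cases "m = n") (auto simp: less_le)

lemma Nidx_ge: "n \<le> Nidx a T n"
proof (induction n)
  case (Suc n) then show ?case using Nidx_Suc_props(2)[of n] by simp
qed simp

lemma Tn_strict: "m < n \<Longrightarrow> Tn a T m < Tn a T n"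
  by (simp add: Tn_def Nidx_strict)

lemma Tn_mono: "m \<le> n \<Longrightarrow> Tn a T m \<le> Tn a T n"
  by (simp add: Tn_def Nidx_mono)

lemma blk_eq:
  assumes "Tn a T n \<le> t" "t < Tn a T (Suc n)"
  shows "blk a T t = n"
  unfolding blk_def
proof (rule Least_equality)
  show "t < Tn a T (Suc n)" by fact
  fix k assume "t < Tn a T (Suc k)"
  then have "Tn a T n < Tn a T (Suc k)" using assms by linarith
  then show "n \<le> k" by (metis Tn_mono not_less not_less_eq_eq)
qed

lemma blk_tt:
  assumes "Nidx a T n \<le> m" "m < Nidx a T (Suc n)"
  shows "blk a T (tt a m) = n"
  using assms by (intro blk_eq) (auto simp: Tn_def)

lemma rr_eq: "rr a T X n = max (norm (X (Nidx a T n))) 1"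
  by (simp add: rr_def Tn_def xbar_tt)

lemma xhat_tt:
  assumes "Nidx a T n \<le> m" "m < Nidx a T (Suc n)"
  shows "xhat a T X (tt a m) = X m /\<^sub>R rr a T X n"
  using assms by (simp add: xhat_def xbar_tt blk_tt)

end


locale path = stepsz +
  fixes h :: "'b::euclidean_space \<Rightarrow> 'c \<Rightarrow> 'b" and X :: "nat \<Rightarrow> 'b" and Y :: "nat \<Rightarrow> 'c"
    and E :: "nat \<Rightarrow> 'b"
  assumes rec: "\<And>k. X (Suc k) = X k + a k *\<^sub>R (h (X k) (Y k) + E (Suc k))"
begin

abbreviation "NN n \<equiv> Nidx a T n"
abbreviation "rn n \<equiv> rr a T X n"

definition cc :: "nat \<Rightarrow> nat \<Rightarrow> 'b" where "cc n i = h (X i) (Y i) /\<^sub>R rn n"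
definition Zs :: "nat \<Rightarrow> nat \<Rightarrow> 'b" where
  "Zs n m = (\<Sum>i\<in>{NN n..<m}. (a i / rn n) *\<^sub>R E (Suc i))"

lemma rn_ge1: "rn n \<ge> 1" by (simp add: rr_eq)

lemma rec_sum:
  assumes "NN n \<le> m"
  shows "X m /\<^sub>R rn n = X (NN n) /\<^sub>R rn n + (\<Sum>i\<in>{NN n..<m}. a i *\<^sub>R cc n i) + Zs n m"
  using assms
proof (induction m rule: dec_induct)
  case base then show ?case by (simp add: Zs_def)
next
  case (step m)
  have r: "rn n \<noteq> 0" using rn_ge1[of n] by simp
  have "X (Suc m) /\<^sub>R rn n = X m /\<^sub>R rn n + a m *\<^sub>R cc n m + (a m / rn n) *\<^sub>R E (Suc m)"
    by (subst rec) (simp add: cc_def scaleR_add_right algebra_simps divide_inverse)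
  moreover have "{NN n..<Suc m} = insert m {NN n..<m}" using step.hyps by auto
  ultimately show ?case using step by (simp add: Zs_def algebra_simps)
qed

lemma zhat_eq:
  assumes "NN n \<le> j" "j < NN (Suc n)" "tt a j \<le> t" "t < tt a (Suc j)"
  shows "zhat h a T X Y t = cc n j"
proof -
  have i: "idx a t = j" using assms idx_eq by blast
  have "tt a (NN n) \<le> t" using assms(1,3) tt_mono[of "NN n" j] by linarith
  moreover have "tt a (Suc j) \<le> tt a (NN (Suc n))" using assms(2) tt_le_iff[of "Suc j" "NN (Suc n)"] by (simp only: Suc_le_eq)
  moreover have "t < tt a (NN (Suc n))" using assms(4) calculation(2) by linarith
  ultimately have b: "blk a T t = n" by (intro blk_eq) (auto simp: Tn_def)
  have r: "rn n \<noteq> 0" using rn_ge1[of n] by simp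
  show ?thesis using xhat_tt[OF assms(1,2), of X] r
    by (simp add: zhat_def i b hc_def cc_def)
qed

lemma piece:
  assumes "NN n \<le> j" "j < NN (Suc n)" "tt a j \<le> t" "t \<le> tt a (Suc j)"
  shows "((\<lambda>s. zhat h a T X Y (Tn a T n + s)) has_integral ((t - tt a j) *\<^sub>R cc n j))
           {tt a j - Tn a T n .. t - Tn a T n}"
proof (rule has_integral_spike[where S="{tt a (Suc j) - Tn a T n}" and f="\<lambda>s. cc n j"])
  show "negligible {tt a (Suc j) - Tn a T n}" by auto
  fix s assume s: "s \<in> {tt a j - Tn a T n..t - Tn a T n} - {tt a (Suc j) - Tn a T n}"
  show "zhat h a T X Y (Tn a T n + s) = cc n j"
    using s assms by (intro zhat_eq) auto
next
  show "((\<lambda>s. cc n j) has_integral (t - tt a j) *\<^sub>R cc n j) {tt a j - Tn a T n..t - Tn a T n}"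
    using has_integral_const_real[of "cc n j" "tt a j - Tn a T n" "t - Tn a T n"] assms by simp
qed

lemma integral_formula:
  assumes "NN n \<le> j" "j < NN (Suc n)" "tt a j \<le> t" "t \<le> tt a (Suc j)"
  shows "((\<lambda>s. zhat h a T X Y (Tn a T n + s)) has_integral
     ((\<Sum>i\<in>{NN n..<j}. a i *\<^sub>R cc n i) + (t - tt a j) *\<^sub>R cc n j)) {0 .. t - Tn a T n}"
  using assms
proof (induction j arbitrary: t rule: dec_induct)
  case base
  then show ?case using piece[of n "NN n" t] by (simp add: Tn_def)
next
  case (step j)
  have IH: "((\<lambda>s. zhat h a T X Y (Tn a T n + s)) has_integral
     ((\<Sum>i\<in>{NN n..<j}. a i *\<^sub>R cc n i) + a j *\<^sub>R cc n j)) {0 .. tt a (Suc j) - Tn a T n}"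
    using step.IH[of "tt a (Suc j)"] step.prems step.hyps a_pos[of j] by (simp add: tt_Suc)
  have P: "((\<lambda>s. zhat h a T X Y (Tn a T n + s)) has_integral ((t - tt a (Suc j)) *\<^sub>R cc n (Suc j)))
           {tt a (Suc j) - Tn a T n .. t - Tn a T n}"
    using piece[of n "Suc j" t] step by auto
  have le1: "0 \<le> tt a (Suc j) - Tn a T n" using step.hyps tt_mono[of "NN n" "Suc j"] by (simp add: Tn_def)
  show ?case using has_integral_combine[OF le1 _ IH P] step.prems step.hyps
    by (simp add: add.assoc)
qed

lemma alg_id:
  fixes x0 s z1 z2 c xm xs :: "'d::real_vector"
  assumes "xm = x0 + s + z1" "xs = x0 + s + am *\<^sub>R c + z2" "th * am = d"
  shows "(x0 + (s + d *\<^sub>R c)) - (xm + th *\<^sub>R (xs - xm)) = - ((1 - th) *\<^sub>R z1 + th *\<^sub>R z2)"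
proof -
  from assms(3) have "d *\<^sub>R c = th *\<^sub>R (am *\<^sub>R c)" by simp
  then show ?thesis using assms(1,2) by (simp add: algebra_simps)
qed

lemma xn_eq: "xn h a T X Y n t = X (NN n) /\<^sub>R rn n + integral {0..t} (\<lambda>s. zhat h a T X Y (Tn a T n + s))"
  using xhat_tt[of n "NN n" X] Nidx_Suc_props(2)[of n] by (simp add: xn_def Tn_def)

lemma left_lim:
  "Lim (at_left (Tn a T (Suc n))) (xhat a T X) = X (NN (Suc n)) /\<^sub>R rn n"
proof -
  let ?N' = "NN (Suc n)"
  obtain j where j: "?N' = Suc j" "NN n \<le> j" using Nidx_Suc_props(2)[of n]
    by (metis Suc_le_eq less_imp_Suc_add add_Suc_right le_add1)
  define g where "g \<tau> = (X j + ((\<tau> - tt a j) / a j) *\<^sub>R (X ?N' - X j)) /\<^sub>R rn n" for \<tau>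
  have "(g \<longlongrightarrow> g (tt a ?N')) (at (tt a ?N'))" unfolding g_def using a_pos[of j] by (intro tendsto_intros) auto
  moreover have "g (tt a ?N') = X ?N' /\<^sub>R rn n" using a_pos[of j] by (simp add: g_def j tt_Suc)
  ultimately have "(g \<longlongrightarrow> X ?N' /\<^sub>R rn n) (at_left (tt a ?N'))"
    by (metis Lim_at_imp_Lim_at_within)
  moreover have "eventually (\<lambda>\<tau>. g \<tau> = xhat a T X \<tau>) (at_left (tt a ?N'))"
  proof -
    have "eventually (\<lambda>\<tau>. \<tau> \<in> {tt a j<..<tt a ?N'}) (at_left (tt a ?N'))"
      by (rule eventually_at_left_real) (simp add: j)
    then show ?thesis
    proof (rule eventually_mono)
      fix \<tau> assume t: "\<tau> \<in> {tt a j<..<tt a ?N'}"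
      have i: "idx a \<tau> = j" using t j by (intro idx_eq) auto
      have "tt a (NN n) \<le> tt a j" using j by simp
      then have "tt a (NN n) \<le> \<tau>" using t by (simp del: tt_le_iff)
      then have b: "blk a T \<tau> = n" using t by (intro blk_eq) (auto simp: Tn_def j)
      show "g \<tau> = xhat a T X \<tau>" using a_pos[of j] by (simp add: g_def xhat_def xbar_def i b j)
    qed
  qed
  ultimately have "(xhat a T X \<longlongrightarrow> X ?N' /\<^sub>R rn n) (at_left (Tn a T (Suc n)))"
    unfolding Tn_def by (rule Lim_transform_eventually)
  then show ?thesis by (intro tendsto_Lim) auto
qed

lemma window_bound:
  assumes Zb: "\<And>m. m \<in> {NN n..NN (Suc n)} \<Longrightarrow> norm (Zs n m) \<le> B" and t: "0 \<le> t" "t \<le> T"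
  shows "norm (xn h a T X Y n t - xhat_blk a T X n t) \<le> B"
proof -
  define \<tau> where "\<tau> = Tn a T n + t"
  let ?N = "NN n" and ?N' = "NN (Suc n)" and ?r = "rn n"
  have rpos: "?r \<noteq> 0" using rn_ge1[of n] by simp
  have tle: "\<tau> \<le> Tn a T (Suc n)" using Nidx_Suc_props(1)[of n] t by (simp add: \<tau>_def Tn_def)
  have tge: "Tn a T n \<le> \<tau>" using t by (simp add: \<tau>_def)
  show ?thesis
  proof (cases "\<tau> = Tn a T (Suc n)")
    case False
    with tle have tlt: "\<tau> < Tn a T (Suc n)" by simp
    have t0: "0 \<le> \<tau>" using tge tt_nonneg by (simp add: Tn_def) (metis order_trans tt_nonneg)
    define m where "m = idx a \<tau>"
    have m1: "tt a m \<le> \<tau>" "\<tau> < tt a (Suc m)" using idx_props[OF t0] by (auto simp: m_def)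
    have "tt a ?N < tt a (Suc m)" using m1 tge by (simp add: Tn_def del: tt_less_iff)
    then have mN: "?N \<le> m" by simp
    have "tt a m < tt a ?N'" using m1 tlt by (simp add: Tn_def del: tt_less_iff)
    then have mN': "m < ?N'" by simp
    have b: "blk a T \<tau> = n" using tge tlt by (rule blk_eq)
    have I: "integral {0..t} (\<lambda>s. zhat h a T X Y (Tn a T n + s))
       = (\<Sum>i\<in>{?N..<m}. a i *\<^sub>R cc n i) + (\<tau> - tt a m) *\<^sub>R cc n m"
      using integral_formula[OF mN mN' m1(1)] m1(2) by (simp add: \<tau>_def integral_unique)
    have xb: "xhat_blk a T X n t = X m /\<^sub>R ?r + ((\<tau> - tt a m) / a m) *\<^sub>R (X (Suc m) /\<^sub>R ?r - X m /\<^sub>R ?r)"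
    proof -
      have e: "(u + c *\<^sub>R (v - u)) /\<^sub>R ?r = u /\<^sub>R ?r + c *\<^sub>R (v /\<^sub>R ?r - u /\<^sub>R ?r)" for u v :: 'b and c
        by (simp add: scaleR_add_right scaleR_diff_right mult.commute[of "inverse (rn n)"])
      have "xhat_blk a T X n t = (X m + ((\<tau> - tt a m) / a m) *\<^sub>R (X (Suc m) - X m)) /\<^sub>R ?r"
        using False by (simp add: xhat_blk_def xhat_def xbar_def Let_def b \<tau>_def[symmetric] m_def[symmetric])
      then show ?thesis by (simp only: e)
    qed
    have R1: "X m /\<^sub>R ?r = X ?N /\<^sub>R ?r + (\<Sum>i\<in>{?N..<m}. a i *\<^sub>R cc n i) + Zs n m"
      by (rule rec_sum[OF mN])
    have "X (Suc m) /\<^sub>R ?r = X ?N /\<^sub>R ?r + (\<Sum>i\<in>{?N..<Suc m}. a i *\<^sub>R cc n i) + Zs n (Suc m)"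
      using mN by (intro rec_sum) simp
    moreover have "{?N..<Suc m} = insert m {?N..<m}" using mN by auto
    ultimately have R2: "X (Suc m) /\<^sub>R ?r = X ?N /\<^sub>R ?r + (\<Sum>i\<in>{?N..<m}. a i *\<^sub>R cc n i) + a m *\<^sub>R cc n m + Zs n (Suc m)"
      by (simp add: algebra_simps)
    define th where "th = (\<tau> - tt a m) / a m"
    have th: "th * a m = \<tau> - tt a m" using a_pos[of m] by (simp add: th_def)
    have th01: "0 \<le> th" "th \<le> 1" using m1 a_pos[of m] by (auto simp: th_def tt_Suc field_simps)
    have "xn h a T X Y n t - xhat_blk a T X n t = - ((1 - th) *\<^sub>R Zs n m + th *\<^sub>R Zs n (Suc m))"
      unfolding xn_eq I xb th_def[symmetric] by (rule alg_id[OF R1 R2 th])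
    then have "norm (xn h a T X Y n t - xhat_blk a T X n t) \<le> (1 - th) * norm (Zs n m) + th * norm (Zs n (Suc m))"
    proof -
      have "norm ((1 - th) *\<^sub>R Zs n m + th *\<^sub>R Zs n (Suc m)) \<le> norm ((1 - th) *\<^sub>R Zs n m) + norm (th *\<^sub>R Zs n (Suc m))"
        by (rule norm_triangle_ineq)
      also have "\<dots> = (1 - th) * norm (Zs n m) + th * norm (Zs n (Suc m))" using th01 by simp
      finally show ?thesis using \<open>xn h a T X Y n t - xhat_blk a T X n t = _\<close> by (simp only: norm_minus_cancel)
    qed
    also have "\<dots> \<le> (1 - th) * B + th * B"
      using th01 Zb[of m] Zb[of "Suc m"] mN mN' by (intro add_mono mult_left_mono) auto
    finally show ?thesis by (simp add: algebra_simps)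
  next
    case True
    obtain j where j: "?N' = Suc j" "?N \<le> j" using Nidx_Suc_props(2)[of n]
      by (metis Suc_le_eq less_imp_Suc_add add_Suc_right le_add1)
    have "((\<lambda>s. zhat h a T X Y (Tn a T n + s)) has_integral
     ((\<Sum>i\<in>{?N..<j}. a i *\<^sub>R cc n i) + (tt a (Suc j) - tt a j) *\<^sub>R cc n j)) {0 .. tt a (Suc j) - Tn a T n}"
      using j by (intro integral_formula) auto
    moreover have "{?N..<?N'} = insert j {?N..<j}" using j by auto
    ultimately have H: "((\<lambda>s. zhat h a T X Y (Tn a T n + s)) has_integral
     (\<Sum>i\<in>{?N..<?N'}. a i *\<^sub>R cc n i)) {0 .. tt a ?N' - Tn a T n}"
      using j by (simp add: tt_Suc add.commute)
    have tt: "t = tt a ?N' - Tn a T n" using True by (simp add: \<tau>_def Tn_def)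
    have I: "integral {0..t} (\<lambda>s. zhat h a T X Y (Tn a T n + s)) = (\<Sum>i\<in>{?N..<?N'}. a i *\<^sub>R cc n i)"
      unfolding tt using H by (rule integral_unique)
    have xb: "xhat_blk a T X n t = X ?N' /\<^sub>R ?r"
      using True left_lim by (simp add: xhat_blk_def \<tau>_def)
    have "xn h a T X Y n t - xhat_blk a T X n t = - Zs n ?N'"
      unfolding xn_eq I xb using rec_sum[of n ?N'] Nidx_Suc_props(2)[of n] by simp
    then show ?thesis using Zb[of ?N'] Nidx_Suc_props(2)[of n] by simp
  qed
qed

end


context stepsz begin
lemma sum_a_tt: "m \<le> k \<Longrightarrow> (\<Sum>i\<in>{m..<k}. a i) = tt a k - tt a m"
  by (induction k rule: dec_induct) (auto simp: tt_Suc)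
end

locale gpath = path +
  fixes C0 L :: real
  assumes C0: "C0 \<ge> 0" and L: "L \<ge> 0" and hb: "\<And>k. norm (h (X k) (Y k)) \<le> C0 + L * norm (X k)"
begin

definition "RR = (2 + C0 * (T + 1)) * exp (L * (T + 1))"

definition Zt where
  "Zt n m = (\<Sum>i\<in>{NN n..<m}. (if norm (X i) \<le> RR * rn n then a i / rn n else 0) *\<^sub>R E (Suc i))"

lemma prod_tele:
  fixes b :: "nat \<Rightarrow> real"
  shows "N \<le> j \<Longrightarrow> (\<Prod>i\<in>{N..<j}. 1 + b i) = 1 + (\<Sum>i\<in>{N..<j}. b i * (\<Prod>k\<in>{N..<i}. 1 + b k))"
proof (induction j rule: dec_induct)
  case (step j)
  have "{N..<Suc j} = insert j {N..<j}" using step.hyps by auto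
  then show ?case using step by (simp add: algebra_simps)
qed simp

lemma gron:
  assumes Zb: "\<And>m. m \<in> {NN n..NN (Suc n)} \<Longrightarrow> norm (Zt n m) \<le> 1"
  shows "\<And>m. m \<in> {NN n..NN (Suc n)} \<Longrightarrow> Zs n m = Zt n m"
proof -
  let ?N = "NN n" and ?N' = "NN (Suc n)" and ?r = "rn n"
  define A where "A = 2 + C0 * (T + 1)"
  define P where "P j = (\<Prod>i\<in>{?N..<j}. 1 + L * a i)" for j
  have r1: "?r \<ge> 1" by (rule rn_ge1)
  have suma: "(\<Sum>i\<in>{?N..<j}. a i) \<le> T + 1" if "?N \<le> j" "j \<le> ?N'" for j
  proof -
    have "(\<Sum>i\<in>{?N..<j}. a i) = tt a j - tt a ?N" using that(1) by (rule sum_a_tt)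
    also have "\<dots> \<le> tt a ?N' - tt a ?N" using that by simp
    also have "\<dots> \<le> T + 1" using Nidx_Suc_props(3)[of n] by simp
    finally show ?thesis .
  qed
  have Pb: "A * P j \<le> RR" if "?N \<le> j" "j \<le> ?N'" for j
  proof -
    have "P j \<le> (\<Prod>i\<in>{?N..<j}. exp (L * a i))"
      unfolding P_def using L a_pos by (intro prod_mono) (auto simp: add_pos_nonneg less_imp_le add_nonneg_nonneg)
    also have "\<dots> = exp (L * (\<Sum>i\<in>{?N..<j}. a i))" by (simp add: exp_sum sum_distrib_left)
    also have "\<dots> \<le> exp (L * (T + 1))" using suma[OF that] L by (intro exp_mono mult_left_mono) auto
    finally have "P j \<le> exp (L * (T + 1))" .
    moreover have "0 \<le> A" unfolding A_def using C0 T_pos by simp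
    ultimately show ?thesis unfolding RR_def A_def[symmetric]
      by (intro mult_left_mono) auto
  qed
  have Pnn: "P j \<ge> 0" for j unfolding P_def using L a_pos
    by (intro prod_nonneg) (metis add_nonneg_nonneg less_imp_le mult_nonneg_nonneg zero_le_one)
  have main: "norm (X j) / ?r \<le> A * P j" if "?N \<le> j" "j \<le> ?N'" for j
    using that
  proof (induction j rule: less_induct)
    case (less j)
    have ind: "(if norm (X i) \<le> RR * ?r then a i / ?r else 0) = a i / ?r" if "i \<in> {?N..<j}" for i
    proof -
      have "norm (X i) / ?r \<le> RR" using less.IH[of i] that less.prems Pb[of i] by auto
      then show ?thesis using r1 by (simp add: field_simps)
    qed
    have ZZ: "Zs n j = Zt n j" unfolding Zs_def Zt_def by (rule sum.cong) (auto simp: ind)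
    have "norm (X j) / ?r = norm (X j /\<^sub>R ?r)" using r1 by (simp add: divide_inverse mult.commute)
    also have "\<dots> = norm (X ?N /\<^sub>R ?r + (\<Sum>i\<in>{?N..<j}. a i *\<^sub>R cc n i) + Zs n j)"
      using rec_sum[OF less.prems(1)] by simp
    also have "\<dots> \<le> norm (X ?N /\<^sub>R ?r) + norm (\<Sum>i\<in>{?N..<j}. a i *\<^sub>R cc n i) + norm (Zs n j)"
      by (rule norm_triangle_le) (rule add_mono[OF norm_triangle_ineq order_refl])
    also have "\<dots> \<le> 1 + (\<Sum>i\<in>{?N..<j}. a i * (C0 + L * (norm (X i) / ?r))) + 1"
    proof (intro add_mono)
      show "norm (X ?N /\<^sub>R ?r) \<le> 1" using r1 by (simp add: rr_eq field_simps)
      show "norm (Zs n j) \<le> 1" using ZZ Zb[of j] less.prems by simp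
      have "norm (\<Sum>i\<in>{?N..<j}. a i *\<^sub>R cc n i) \<le> (\<Sum>i\<in>{?N..<j}. norm (a i *\<^sub>R cc n i))"
        by (rule norm_sum)
      also have "\<dots> \<le> (\<Sum>i\<in>{?N..<j}. a i * (C0 + L * (norm (X i) / ?r)))"
      proof (rule sum_mono)
        fix i
        have "norm (cc n i) = norm (h (X i) (Y i)) / ?r" using r1 by (simp add: cc_def divide_inverse mult.commute)
        also have "\<dots> \<le> (C0 + L * norm (X i)) / ?r" using r1 hb[of i] by (simp add: divide_right_mono)
        also have "\<dots> \<le> C0 + L * (norm (X i) / ?r)" using r1 C0
          by (simp add: add_divide_distrib) (simp add: divide_le_eq mult_le_cancel_left1)
        finally show "norm (a i *\<^sub>R cc n i) \<le> a i * (C0 + L * (norm (X i) / ?r))"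
          using a_pos[of i] by (simp add: mult_left_mono)
      qed
      finally show "norm (\<Sum>i\<in>{?N..<j}. a i *\<^sub>R cc n i) \<le> (\<Sum>i\<in>{?N..<j}. a i * (C0 + L * (norm (X i) / ?r)))" .
    qed
    also have "\<dots> = 2 + C0 * (\<Sum>i\<in>{?N..<j}. a i) + (\<Sum>i\<in>{?N..<j}. L * a i * (norm (X i) / ?r))"
      by (simp add: algebra_simps sum.distrib sum_distrib_left)
    also have "\<dots> \<le> A + (\<Sum>i\<in>{?N..<j}. L * a i * (A * P i))"
    proof (intro add_mono sum_mono)
      show "2 + C0 * (\<Sum>i\<in>{?N..<j}. a i) \<le> A" unfolding A_def using suma[OF less.prems] C0
        by (simp add: mult_left_mono)
      fix i assume "i \<in> {?N..<j}"
      then show "L * a i * (norm (X i) / ?r) \<le> L * a i * (A * P i)"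
        using less.IH[of i] less.prems L a_pos[of i] by (intro mult_left_mono) auto
    qed
    also have "\<dots> = A * P j"
      unfolding P_def prod_tele[OF less.prems(1)] by (simp add: algebra_simps sum_distrib_left)
    finally show ?case .
  qed
  fix m assume m: "m \<in> {?N..?N'}"
  have "(if norm (X i) \<le> RR * ?r then a i / ?r else 0) = a i / ?r" if "i \<in> {?N..<m}" for i
  proof -
    have "norm (X i) / ?r \<le> RR" using main[of i] that m Pb[of i] by auto
    then show ?thesis using r1 by (simp add: field_simps)
  qed
  then show "Zs n m = Zt n m" unfolding Zs_def Zt_def by (intro sum.cong) auto
qed

end


lemma L2_mult:
  fixes f g :: "'a \<Rightarrow> real"
  assumes [measurable]: "f \<in> borel_measurable M" "g \<in> borel_measurable M"
    and "integrable M (\<lambda>x. (f x)\<^sup>2)" "integrable M (\<lambda>x. (g x)\<^sup>2)"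
  shows "integrable M (\<lambda>x. f x * g x)"
proof (rule Bochner_Integration.integrable_bound[where f="\<lambda>x. (f x)\<^sup>2 + (g x)\<^sup>2"])
  show "integrable M (\<lambda>x. (f x)\<^sup>2 + (g x)\<^sup>2)" using assms by auto
  show "AE x in M. norm (f x * g x) \<le> norm ((f x)\<^sup>2 + (g x)\<^sup>2)"
  proof (intro AE_I2)
    fix x
    have "2 * \<bar>f x * g x\<bar> \<le> (f x)\<^sup>2 + (g x)\<^sup>2"
      using sum_squares_bound[of "\<bar>f x\<bar>" "\<bar>g x\<bar>"] by (simp add: abs_mult power2_eq_square)
    then show "norm (f x * g x) \<le> norm ((f x)\<^sup>2 + (g x)\<^sup>2)" by simp
  qed
qed measurable

lemma L2_add:
  fixes f g :: "'a \<Rightarrow> real"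
  assumes [measurable]: "f \<in> borel_measurable M" "g \<in> borel_measurable M"
    and "integrable M (\<lambda>x. (f x)\<^sup>2)" "integrable M (\<lambda>x. (g x)\<^sup>2)"
  shows "integrable M (\<lambda>x. (f x + g x)\<^sup>2)"
proof -
  have "integrable M (\<lambda>x. (f x)\<^sup>2 + (g x)\<^sup>2 + 2 * (f x * g x))"
    using assms L2_mult[OF assms] by auto
  then show ?thesis by (simp add: power2_sum mult.assoc)
qed

lemma L2_sum:
  fixes f :: "nat \<Rightarrow> 'a \<Rightarrow> real"
  assumes [measurable]: "\<And>i. i \<in> I \<Longrightarrow> f i \<in> borel_measurable M"
    and "\<And>i. i \<in> I \<Longrightarrow> integrable M (\<lambda>x. (f i x)\<^sup>2)" and "finite I"
  shows "integrable M (\<lambda>x. (\<Sum>i\<in>I. f i x)\<^sup>2)"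
  using assms(3,1,2)
proof (induction I rule: finite_induct)
  case (insert i I)
  have [measurable]: "(\<lambda>x. \<Sum>i\<in>I. f i x) \<in> borel_measurable M" using insert by measurable
  show ?case using insert by (simp add: L2_add)
qed simp

lemma sets_abs_ge: assumes "f \<in> borel_measurable G" shows "{x\<in>space G. (c::real) \<le> \<bar>f x\<bar>} \<in> sets G"
proof -
  have g: "(\<lambda>x. \<bar>f x\<bar>) \<in> borel_measurable G" using assms by (rule borel_measurable_abs)
  have "(\<lambda>x. \<bar>f x\<bar>) -` {c..} \<inter> space G \<in> sets G" by (rule measurable_sets[OF g]) auto
  then show ?thesis by (simp add: vimage_def Int_def conj_commute)
qed
lemma sets_abs_less: assumes "f \<in> borel_measurable G" shows "{x\<in>space G. \<bar>f x\<bar> < (c::real)} \<in> sets G"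
proof -
  have g: "(\<lambda>x. \<bar>f x\<bar>) \<in> borel_measurable G" using assms by (rule borel_measurable_abs)
  have "(\<lambda>x. \<bar>f x\<bar>) -` {..<c} \<inter> space G \<in> sets G" by (rule measurable_sets[OF g]) auto
  then show ?thesis by (simp add: vimage_def Int_def conj_commute)
qed

lemma integrable_ind_mult:
  fixes f :: "'a \<Rightarrow> real"
  shows "A \<in> sets M \<Longrightarrow> integrable M f \<Longrightarrow> integrable M (\<lambda>x. indicator A x * f x)"
  using integrable_mult_indicator[of A M f] by simp

lemma (in prob_space) kolmogorov:
  fixes X :: "nat \<Rightarrow> 'a \<Rightarrow> real" and G :: "nat \<Rightarrow> 'a measure"
  assumes sub: "\<And>i. subalgebra M (G i)"
    and mono: "\<And>i j. i \<le> j \<Longrightarrow> sets (G i) \<subseteq> sets (G j)"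
    and Xm: "\<And>i. N \<le> i \<Longrightarrow> i < N' \<Longrightarrow> X i \<in> borel_measurable (G (Suc i))"
    and Xsq: "\<And>i. N \<le> i \<Longrightarrow> i < N' \<Longrightarrow> integrable M (\<lambda>\<omega>. (X i \<omega>)\<^sup>2)"
    and orth: "\<And>i g. N \<le> i \<Longrightarrow> i < N' \<Longrightarrow> g \<in> borel_measurable (G i) \<Longrightarrow>
        integrable M (\<lambda>\<omega>. g \<omega> * X i \<omega>) \<Longrightarrow> (\<integral>\<omega>. g \<omega> * X i \<omega> \<partial>M) = 0"
    and \<delta>: "\<delta> > 0" and NN': "N \<le> N'"
  shows "measure M {\<omega>\<in>space M. \<exists>m\<in>{N..N'}. \<delta> \<le> \<bar>\<Sum>i\<in>{N..<m}. X i \<omega>\<bar>}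
     \<le> (\<Sum>i\<in>{N..<N'}. \<integral>\<omega>. (X i \<omega>)\<^sup>2 \<partial>M) / \<delta>\<^sup>2"
proof -
  define S where "S m \<omega> = (\<Sum>i\<in>{N..<m}. X i \<omega>)" for m \<omega>
  have spG: "space (G i) = space M" for i using sub[of i] by (simp add: subalgebra_def)
  have up: "f \<in> borel_measurable (G j)" if "f \<in> borel_measurable (G i)" "i \<le> j" for f i j
  proof (rule measurable_from_subalg[OF _ that(1)])
    show "subalgebra (G j) (G i)" using mono[OF that(2)] spG by (simp add: subalgebra_def)
  qed
  have toM: "f \<in> borel_measurable M" if "f \<in> borel_measurable (G i)" for f i
    by (rule measurable_from_subalg[OF sub that])
  have XG: "X i \<in> borel_measurable (G j)" if "N \<le> i" "i < j" "j \<le> N'" for i j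
    using that by (intro up[OF Xm]) auto
  have XM: "X i \<in> borel_measurable M" if "N \<le> i" "i < N'" for i
    using that by (intro toM[OF Xm]) auto
  have SG: "S m \<in> borel_measurable (G k)" if "m \<le> k" "k \<le> N'" for m k
    unfolding S_def using that by (intro borel_measurable_sum XG) auto
  have SM: "S m \<in> borel_measurable M" if "m \<le> N'" for m
    using SG[OF order_refl that] toM by blast
  have S2: "integrable M (\<lambda>\<omega>. (S m \<omega>)\<^sup>2)" if "m \<le> N'" for m
    unfolding S_def using that by (intro L2_sum XM Xsq) auto
  have energy: "(\<integral>\<omega>. (S m \<omega>)\<^sup>2 \<partial>M) = (\<Sum>i\<in>{N..<m}. \<integral>\<omega>. (X i \<omega>)\<^sup>2 \<partial>M)"
    if "N \<le> m" "m \<le> N'" for m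
    using that
  proof (induction m rule: dec_induct)
    case base then show ?case by (simp add: S_def)
  next
    case (step m)
    have Sm: "S (Suc m) \<omega> = S m \<omega> + X m \<omega>" for \<omega> using step.hyps by (simp add: S_def)
    have i1: "integrable M (\<lambda>\<omega>. (S m \<omega>)\<^sup>2)" using step by (intro S2) auto
    have i2: "integrable M (\<lambda>\<omega>. (X m \<omega>)\<^sup>2)" using step by (intro Xsq) auto
    have i3: "integrable M (\<lambda>\<omega>. S m \<omega> * X m \<omega>)"
      using step by (intro L2_mult SM XM i1 i2) auto
    have o: "(\<integral>\<omega>. S m \<omega> * X m \<omega> \<partial>M) = 0"
      using step by (intro orth i3 SG) auto
    have "(\<integral>\<omega>. (S (Suc m) \<omega>)\<^sup>2 \<partial>M) = (\<integral>\<omega>. (S m \<omega>)\<^sup>2 + (X m \<omega>)\<^sup>2 + 2 * (S m \<omega> * X m \<omega>) \<partial>M)"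
      by (simp add: Sm power2_sum mult.assoc)
    also have "\<dots> = (\<integral>\<omega>. (S m \<omega>)\<^sup>2 \<partial>M) + (\<integral>\<omega>. (X m \<omega>)\<^sup>2 \<partial>M)"
      using i1 i2 i3 o by simp
    finally show ?case using step by simp
  qed
  define A where "A k = {\<omega>\<in>space M. \<delta> \<le> \<bar>S k \<omega>\<bar> \<and> (\<forall>j\<in>{N..<k}. \<bar>S j \<omega>\<bar> < \<delta>)}" for k
  have AG: "A k \<in> sets (G k)" if "k \<le> N'" for k
  proof -
    have "{\<omega>\<in>space (G k). \<delta> \<le> \<bar>S k \<omega>\<bar> \<and> (\<forall>j\<in>{N..<k}. \<bar>S j \<omega>\<bar> < \<delta>)} \<in> sets (G k)"
    proof (rule sets.sets_Collect_conj)
      show "{\<omega>\<in>space (G k). \<delta> \<le> \<bar>S k \<omega>\<bar>} \<in> sets (G k)" using that by (intro sets_abs_ge SG) auto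
      show "{\<omega>\<in>space (G k). \<forall>j\<in>{N..<k}. \<bar>S j \<omega>\<bar> < \<delta>} \<in> sets (G k)"
      proof (rule sets.sets_Collect_finite_All)
        fix j assume "j \<in> {N..<k}"
        then show "{\<omega>\<in>space (G k). \<bar>S j \<omega>\<bar> < \<delta>} \<in> sets (G k)" using that by (intro sets_abs_less SG) auto
      qed auto
    qed
    then show ?thesis unfolding A_def spG .
  qed
  have AM: "A k \<in> sets M" if "k \<le> N'" for k using AG[OF that] sub[of k] by (auto simp: subalgebra_def)
  define E where "E = {\<omega>\<in>space M. \<exists>m\<in>{N..N'}. \<delta> \<le> \<bar>\<Sum>i\<in>{N..<m}. X i \<omega>\<bar>}"
  have EA: "E \<subseteq> (\<Union>k\<in>{N..N'}. A k)"
  proof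
    fix \<omega> assume "\<omega> \<in> E"
    then obtain m where m: "m \<in> {N..N'}" "\<delta> \<le> \<bar>S m \<omega>\<bar>" and sp: "\<omega> \<in> space M" by (auto simp: E_def S_def)
    define k where "k = (LEAST k. k \<in> {N..N'} \<and> \<delta> \<le> \<bar>S k \<omega>\<bar>)"
    have k: "k \<in> {N..N'} \<and> \<delta> \<le> \<bar>S k \<omega>\<bar>" unfolding k_def by (rule LeastI[of _ m]) (use m in auto)
    have "\<bar>S j \<omega>\<bar> < \<delta>" if "j \<in> {N..<k}" for j
    proof (rule ccontr)
      assume "\<not> \<bar>S j \<omega>\<bar> < \<delta>"
      then have "k \<le> j" unfolding k_def using that k by (intro Least_le) auto
      with that show False by auto
    qed
    then show "\<omega> \<in> (\<Union>k\<in>{N..N'}. A k)" using k sp by (auto simp: A_def)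
  qed
  have disj: "disjoint_family_on A {N..N'}"
  proof (auto simp: disjoint_family_on_def)
    fix k k' \<omega> assume kk: "k \<noteq> k'" "\<omega> \<in> A k" "\<omega> \<in> A k'" "N \<le> k" "N \<le> k'"
    show False
    proof (cases "k < k'")
      case True
      from kk(3) have "\<forall>j\<in>{N..<k'}. \<bar>S j \<omega>\<bar> < \<delta>" by (simp add: A_def)
      then have "\<bar>S k \<omega>\<bar> < \<delta>" using True kk(4) by auto
      moreover from kk(2) have "\<delta> \<le> \<bar>S k \<omega>\<bar>" by (simp add: A_def)
      ultimately show False by simp
    next
      case False then have F: "k' < k" using kk by simp
      from kk(2) have "\<forall>j\<in>{N..<k}. \<bar>S j \<omega>\<bar> < \<delta>" by (simp add: A_def)
      then have "\<bar>S k' \<omega>\<bar> < \<delta>" using F kk(5) by auto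
      moreover from kk(3) have "\<delta> \<le> \<bar>S k' \<omega>\<bar>" by (simp add: A_def)
      ultimately show False by simp
    qed
  qed
  have fin: "measure M E \<le> (\<Sum>k\<in>{N..N'}. measure M (A k))"
  proof -
    have "measure M E \<le> measure M (\<Union>k\<in>{N..N'}. A k)"
      using EA AM by (intro finite_measure_mono) auto
    also have "\<dots> \<le> (\<Sum>k\<in>{N..N'}. measure M (A k))" using AM by (intro measure_UNION_le) auto
    finally show ?thesis .
  qed
  have stepk: "\<delta>\<^sup>2 * measure M (A k) \<le> (\<integral>\<omega>. indicator (A k) \<omega> * (S N' \<omega>)\<^sup>2 \<partial>M)"
    if k: "N \<le> k" "k \<le> N'" for k
  proof -
    have Ak: "A k \<in> sets M" using AM k by simp
    have iSk: "integrable M (\<lambda>\<omega>. indicator (A k) \<omega> * (S k \<omega>)\<^sup>2)" using Ak S2 k by (intro integrable_ind_mult) auto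
    have "\<delta>\<^sup>2 * measure M (A k) = (\<integral>\<omega>. indicator (A k) \<omega> * \<delta>\<^sup>2 \<partial>M)"
      using Ak by (simp add: mult.commute)
    also have "\<dots> \<le> (\<integral>\<omega>. indicator (A k) \<omega> * (S k \<omega>)\<^sup>2 \<partial>M)"
    proof (rule integral_mono[OF _ iSk])
      show "integrable M (\<lambda>\<omega>. indicator (A k) \<omega> * \<delta>\<^sup>2)" using Ak by (intro integrable_ind_mult) auto
      fix \<omega> assume "\<omega> \<in> space M"
      show "indicator (A k) \<omega> * \<delta>\<^sup>2 \<le> indicator (A k) \<omega> * (S k \<omega>)\<^sup>2"
      proof (cases "\<omega> \<in> A k")
        case True
        then have "\<delta> \<le> \<bar>S k \<omega>\<bar>" by (simp add: A_def)
        then have "\<delta>\<^sup>2 \<le> \<bar>S k \<omega>\<bar>\<^sup>2" using \<delta> by (intro power_mono) auto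
        then show ?thesis using True by simp
      qed simp
    qed
    also have "\<dots> \<le> (\<integral>\<omega>. indicator (A k) \<omega> * (S N' \<omega>)\<^sup>2 \<partial>M)"
    proof -
      define R where "R \<omega> = (\<Sum>i\<in>{k..<N'}. X i \<omega>)" for \<omega>
      have SR: "S N' \<omega> = S k \<omega> + R \<omega>" for \<omega>
        unfolding S_def R_def using k by (simp add: sum.atLeastLessThan_concat)
      define g where "g \<omega> = indicator (A k) \<omega> * S k \<omega>" for \<omega>
      have gG: "g \<in> borel_measurable (G k)" unfolding g_def using AG[of k] SG[of k k] k
        by (intro borel_measurable_times borel_measurable_indicator) auto
      have gM: "g \<in> borel_measurable M" by (rule toM[OF gG])
      have g2: "integrable M (\<lambda>\<omega>. (g \<omega>)\<^sup>2)"
      proof -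
        have "(g \<omega>)\<^sup>2 = indicator (A k) \<omega> * (S k \<omega>)\<^sup>2" for \<omega> by (simp add: g_def power_mult_distrib indicator_def)
        then show ?thesis using iSk by simp
      qed
      have RM: "R \<in> borel_measurable M" unfolding R_def using k by (intro borel_measurable_sum XM) auto
      have R2: "integrable M (\<lambda>\<omega>. (R \<omega>)\<^sup>2)" unfolding R_def using k by (intro L2_sum XM Xsq) auto
      have o: "(\<integral>\<omega>. g \<omega> * R \<omega> \<partial>M) = 0"
      proof -
        have ii: "integrable M (\<lambda>\<omega>. g \<omega> * X i \<omega>)" if "i \<in> {k..<N'}" for i
          using that k by (intro L2_mult gM XM g2 Xsq) auto
        have "(\<integral>\<omega>. g \<omega> * R \<omega> \<partial>M) = (\<integral>\<omega>. (\<Sum>i\<in>{k..<N'}. g \<omega> * X i \<omega>) \<partial>M)"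
          by (simp add: R_def sum_distrib_left)
        also have "\<dots> = (\<Sum>i\<in>{k..<N'}. \<integral>\<omega>. g \<omega> * X i \<omega> \<partial>M)" using ii by (rule Bochner_Integration.integral_sum[where f="\<lambda>i \<omega>. g \<omega> * X i \<omega>"])
        also have "\<dots> = 0"
        proof (rule sum.neutral, rule ballI)
          fix i assume i: "i \<in> {k..<N'}"
          show "(\<integral>\<omega>. g \<omega> * X i \<omega> \<partial>M) = 0"
            using i k by (intro orth ii up[OF gG]) auto
        qed
        finally show ?thesis .
      qed
      have iR: "integrable M (\<lambda>\<omega>. indicator (A k) \<omega> * (R \<omega>)\<^sup>2)" using R2 AM k by (intro integrable_ind_mult) auto
      have igR: "integrable M (\<lambda>\<omega>. g \<omega> * R \<omega>)" by (intro L2_mult gM RM g2 R2)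
      have eq: "indicator (A k) \<omega> * (S N' \<omega>)\<^sup>2 = indicator (A k) \<omega> * (S k \<omega>)\<^sup>2 + 2 * (g \<omega> * R \<omega>) + indicator (A k) \<omega> * (R \<omega>)\<^sup>2" for \<omega>
        by (simp add: SR g_def power2_sum indicator_def)
      have "(\<integral>\<omega>. indicator (A k) \<omega> * (S N' \<omega>)\<^sup>2 \<partial>M)
          = (\<integral>\<omega>. indicator (A k) \<omega> * (S k \<omega>)\<^sup>2 \<partial>M) + 2 * (\<integral>\<omega>. g \<omega> * R \<omega> \<partial>M) + (\<integral>\<omega>. indicator (A k) \<omega> * (R \<omega>)\<^sup>2 \<partial>M)"
        unfolding eq using iSk igR iR by simp
      moreover have "0 \<le> (\<integral>\<omega>. indicator (A k) \<omega> * (R \<omega>)\<^sup>2 \<partial>M)" by (intro integral_nonneg_AE) auto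
      ultimately show ?thesis using o by simp
    qed
    finally show ?thesis .
  qed
  have "\<delta>\<^sup>2 * measure M E \<le> (\<Sum>k\<in>{N..N'}. \<delta>\<^sup>2 * measure M (A k))"
    using mult_left_mono[OF fin, of "\<delta>\<^sup>2"] by (simp add: sum_distrib_left)
  also have "\<dots> \<le> (\<Sum>k\<in>{N..N'}. \<integral>\<omega>. indicator (A k) \<omega> * (S N' \<omega>)\<^sup>2 \<partial>M)"
    using stepk by (intro sum_mono) auto
  also have "\<dots> = (\<integral>\<omega>. (\<Sum>k\<in>{N..N'}. indicator (A k) \<omega> * (S N' \<omega>)\<^sup>2) \<partial>M)"
    by (rule Bochner_Integration.integral_sum[symmetric, where f="\<lambda>k \<omega>. indicator (A k) \<omega> * (S N' \<omega>)\<^sup>2"])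
      (use AM S2 in \<open>auto intro: integrable_ind_mult\<close>)
  also have "\<dots> = (\<integral>\<omega>. (\<Sum>k\<in>{N..N'}. indicator (A k) \<omega>) * (S N' \<omega>)\<^sup>2 \<partial>M)"
    by (simp only: sum_distrib_right)
  also have "\<dots> \<le> (\<integral>\<omega>. (S N' \<omega>)\<^sup>2 \<partial>M)"
  proof (rule integral_mono)
    show "integrable M (\<lambda>\<omega>. (\<Sum>k\<in>{N..N'}. indicator (A k) \<omega>) * (S N' \<omega>)\<^sup>2)"
      unfolding sum_distrib_right by (intro Bochner_Integration.integrable_sum integrable_ind_mult) (use AM S2 in auto)
    show "integrable M (\<lambda>\<omega>. (S N' \<omega>)\<^sup>2)" using S2 by simp
    fix \<omega> assume "\<omega> \<in> space M"
    have "(\<Sum>k\<in>{N..N'}. indicator (A k) \<omega>) \<le> (1::real)"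
    proof (cases "\<exists>j\<in>{N..N'}. \<omega> \<in> A j")
      case True
      then obtain j where j: "j \<in> {N..N'}" "\<omega> \<in> A j" by blast
      have "(\<Sum>k\<in>{N..N'}. 1 * indicator (A k) \<omega>) = (1::real)"
        by (rule sum_indicator_disjoint_family[OF disj j(2) _ j(1)]) simp
      then show ?thesis by simp
    qed (auto simp: indicator_def)
    then show "(\<Sum>k\<in>{N..N'}. indicator (A k) \<omega>) * (S N' \<omega>)\<^sup>2 \<le> (S N' \<omega>)\<^sup>2"
      by (simp add: mult_left_le_one_le sum_nonneg)
  qed
  also have "\<dots> = (\<Sum>i\<in>{N..<N'}. \<integral>\<omega>. (X i \<omega>)\<^sup>2 \<partial>M)" using energy NN' by simp
  finally have "\<delta>\<^sup>2 * measure M E \<le> (\<Sum>i\<in>{N..<N'}. \<integral>\<omega>. (X i \<omega>)\<^sup>2 \<partial>M)" .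
  then show ?thesis unfolding E_def[symmetric] using \<delta> by (simp add: field_simps)
qed



definition qq :: "nat \<Rightarrow> 'b::euclidean_space \<Rightarrow> 'b" where
  "qq k u = (\<Sum>b\<in>Basis. (real_of_int \<lfloor>real (Suc k) * (u \<bullet> b)\<rfloor> / real (Suc k)) *\<^sub>R b)"

lemma qq_close: "norm (qq k u - u) \<le> real DIM('b) / real (Suc k)" for u :: "'b::euclidean_space"
proof -
  let ?c = "real (Suc k)"
  have "qq k u - u = (\<Sum>b\<in>Basis. (real_of_int \<lfloor>?c * (u \<bullet> b)\<rfloor> / ?c - u \<bullet> b) *\<^sub>R b)"
    unfolding qq_def by (subst (2) euclidean_representation[symmetric]) (simp add: sum_subtractf scaleR_diff_left)
  also have "norm \<dots> \<le> (\<Sum>b\<in>Basis. norm ((real_of_int \<lfloor>?c * (u \<bullet> b)\<rfloor> / ?c - u \<bullet> b) *\<^sub>R b))"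
    by (rule norm_sum)
  also have "\<dots> \<le> (\<Sum>b\<in>(Basis::'b set). 1 / ?c)"
  proof (rule sum_mono)
    fix b :: 'b assume b: "b \<in> Basis"
    have "\<bar>real_of_int \<lfloor>?c * (u \<bullet> b)\<rfloor> - ?c * (u \<bullet> b)\<bar> \<le> 1"
      using of_int_floor_le[of "?c * (u \<bullet> b)"] real_of_int_floor_add_one_gt[of "?c * (u \<bullet> b)"] by linarith
    moreover have "real_of_int \<lfloor>?c * (u \<bullet> b)\<rfloor> / ?c - u \<bullet> b = (real_of_int \<lfloor>?c * (u \<bullet> b)\<rfloor> - ?c * (u \<bullet> b)) / ?c"
      by (simp add: field_simps del: of_nat_Suc)
    ultimately have "\<bar>real_of_int \<lfloor>?c * (u \<bullet> b)\<rfloor> / ?c - u \<bullet> b\<bar> \<le> 1 / ?c"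
      by (simp add: abs_divide divide_right_mono del: of_nat_Suc)
    then show "norm ((real_of_int \<lfloor>?c * (u \<bullet> b)\<rfloor> / ?c - u \<bullet> b) *\<^sub>R b) \<le> 1 / ?c"
      using b by simp
  qed
  also have "\<dots> = real DIM('b) / ?c" by simp
  finally show ?thesis .
qed

lemma countable_range_qq: "countable (range (qq k :: 'b::euclidean_space \<Rightarrow> 'b))"
proof -
  define enc :: "('b \<Rightarrow> int) \<Rightarrow> 'b" where
    "enc z = (\<Sum>b\<in>Basis. (real_of_int (z b) / real (Suc k)) *\<^sub>R b)" for z
  have sub: "range (qq k :: 'b \<Rightarrow> 'b) \<subseteq> enc ` (Basis \<rightarrow>\<^sub>E (UNIV::int set))"
  proof
    fix w assume "w \<in> range (qq k :: 'b \<Rightarrow> 'b)"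
    then obtain u where u: "w = qq k u" by auto
    let ?z = "restrict (\<lambda>b. \<lfloor>real (Suc k) * (u \<bullet> b)\<rfloor>) Basis"
    have "w = enc ?z" unfolding u qq_def enc_def by (intro sum.cong) auto
    moreover have "?z \<in> Basis \<rightarrow>\<^sub>E UNIV" by auto
    ultimately show "w \<in> enc ` (Basis \<rightarrow>\<^sub>E UNIV)" by blast
  qed
  have "countable (Basis \<rightarrow>\<^sub>E (UNIV::int set))" by (intro countable_PiE) auto
  then have "countable (enc ` (Basis \<rightarrow>\<^sub>E (UNIV::int set)))" by (rule countable_image)
  then show ?thesis by (rule countable_subset[OF sub])
qed

lemma meas_h:
  fixes h :: "'b::euclidean_space \<Rightarrow> 'c::metric_space \<Rightarrow> 'b"
  assumes hc: "continuous_on (UNIV \<times> S) (\<lambda>(u, v). h u v)"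
    and lip: "\<And>u1 u2 v. v \<in> S \<Longrightarrow> norm (h u1 v - h u2 v) \<le> L * norm (u1 - u2)"
    and f[measurable]: "f \<in> borel_measurable N" and g: "g \<in> borel_measurable N"
    and gS: "\<And>\<omega>. \<omega> \<in> space N \<Longrightarrow> g \<omega> \<in> S"
  shows "(\<lambda>\<omega>. h (f \<omega>) (g \<omega>)) \<in> borel_measurable N"
proof -
  have hu: "(\<lambda>\<omega>. h u (g \<omega>)) \<in> borel_measurable N" for u
  proof -
    have "continuous_on S (h u)"
    proof -
      have "continuous_on S ((\<lambda>(u, v). h u v) \<circ> (\<lambda>v. (u, v)))"
        by (rule continuous_on_compose) (auto intro!: continuous_intros intro: continuous_on_subset[OF hc])
      then show ?thesis by (simp add: o_def)
    qed
    then have "h u \<in> borel_measurable (restrict_space borel S)" by (rule borel_measurable_continuous_on_restrict)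
    moreover have "g \<in> N \<rightarrow>\<^sub>M restrict_space borel S" using gS g by (intro measurable_restrict_space2) auto
    ultimately show ?thesis using measurable_comp[of g N "restrict_space borel S" "h u" borel] by (simp add: o_def)
  qed
  have approx: "(\<lambda>\<omega>. h (qq k (f \<omega>)) (g \<omega>)) \<in> borel_measurable N" for k
  proof (rule measurable_compose_countable'[where I="range (qq k)" and f="\<lambda>i \<omega>. h i (g \<omega>)"])
    show "countable (range (qq k :: 'b \<Rightarrow> 'b))" by (rule countable_range_qq)
    show "(\<lambda>\<omega>. h i (g \<omega>)) \<in> borel_measurable N" for i by (rule hu)
    have qm: "(\<lambda>\<omega>. qq k (f \<omega>)) \<in> borel_measurable N" unfolding qq_def by measurable
    show "(\<lambda>\<omega>. qq k (f \<omega>)) \<in> N \<rightarrow>\<^sub>M count_space (range (qq k))"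
    proof (subst measurable_count_space_eq_countable[OF countable_range_qq], intro conjI ballI)
      show "(\<lambda>\<omega>. qq k (f \<omega>)) \<in> space N \<rightarrow> range (qq k)" by auto
      fix a :: 'b
      have "(\<lambda>\<omega>. qq k (f \<omega>)) -` {a} \<inter> space N \<in> sets N" by (rule measurable_sets[OF qm]) auto
      then show "(\<lambda>\<omega>. qq k (f \<omega>)) -` {a} \<inter> space N \<in> sets N" .
    qed
  qed
  show ?thesis
  proof (rule borel_measurable_LIMSEQ_metric[OF approx])
    fix \<omega> assume \<omega>: "\<omega> \<in> space N"
    show "(\<lambda>k. h (qq k (f \<omega>)) (g \<omega>)) \<longlonglongrightarrow> h (f \<omega>) (g \<omega>)"
    proof (rule LIM_zero_cancel, rule Lim_null_comparison)
      show "\<forall>\<^sub>F k in sequentially. norm (h (qq k (f \<omega>)) (g \<omega>) - h (f \<omega>) (g \<omega>)) \<le> \<bar>L\<bar> * real DIM('b) * inverse (real (Suc k))"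
      proof (intro always_eventually allI)
        fix k
        have "norm (h (qq k (f \<omega>)) (g \<omega>) - h (f \<omega>) (g \<omega>)) \<le> L * norm (qq k (f \<omega>) - f \<omega>)"
          using lip gS[OF \<omega>] by blast
        also have "\<dots> \<le> \<bar>L\<bar> * norm (qq k (f \<omega>) - f \<omega>)" by (intro mult_right_mono) auto
        also have "\<dots> \<le> \<bar>L\<bar> * (real DIM('b) / real (Suc k))" by (intro mult_left_mono qq_close) auto
        finally show "norm (h (qq k (f \<omega>)) (g \<omega>) - h (f \<omega>) (g \<omega>)) \<le> \<bar>L\<bar> * real DIM('b) * inverse (real (Suc k))"
          by (simp add: divide_inverse mult.assoc)
      qed
      show "(\<lambda>k. \<bar>L\<bar> * real DIM('b) * inverse (real (Suc k))) \<longlonglongrightarrow> 0"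
        by (intro tendsto_mult_right_zero LIMSEQ_inverse_real_of_nat)
    qed
  qed
qed



locale setting =
  fixes M :: "'a measure" and F :: "nat \<Rightarrow> 'a measure"
    and S :: "'c::metric_space set"
    and h :: "'b::euclidean_space \<Rightarrow> 'c \<Rightarrow> 'b"
    and a :: "nat \<Rightarrow> real" and L K T :: real
    and x :: "nat \<Rightarrow> 'a \<Rightarrow> 'b" and y :: "nat \<Rightarrow> 'a \<Rightarrow> 'c" and Mn :: "nat \<Rightarrow> 'a \<Rightarrow> 'b"
  assumes S_compact: "compact S"
    and h_cont: "continuous_on (UNIV \<times> S) (\<lambda>(u, v). h u v)"
    and L_pos: "L > 0"
    and h_lip: "\<And>u1 u2 v. v \<in> S \<Longrightarrow> norm (h u1 v - h u2 v) \<le> L * norm (u1 - u2)"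
    and a_pos: "\<And>n. a n > 0"
    and a_div: "\<not> summable a"
    and a_sq: "summable (\<lambda>n. (a n)\<^sup>2)"
    and a_le1: "\<And>n. a n \<le> 1"
    and prob: "prob_space M"
    and filt: "filtration M F"
    and y_S: "\<And>n \<omega>. \<omega> \<in> space M \<Longrightarrow> y n \<omega> \<in> S"
    and y_adapt: "\<And>n. y n \<in> borel_measurable (F n)"
    and x0_meas: "x 0 \<in> borel_measurable (F 0)"
    and M_adapt: "\<And>n. Mn (Suc n) \<in> borel_measurable (F (Suc n))"
    and M_sq_int: "\<And>n. integrable M (\<lambda>\<omega>. (norm (Mn (Suc n) \<omega>))\<^sup>2)"
    and M_mds: "\<And>n b. b \<in> Basis \<Longrightarrow>
        AE \<omega> in M. real_cond_exp M (F n) (\<lambda>\<omega>. Mn (Suc n) \<omega> \<bullet> b) \<omega> = 0"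
    and M_var: "\<And>n. AE \<omega> in M.
        real_cond_exp M (F n) (\<lambda>\<omega>. (norm (Mn (Suc n) \<omega>))\<^sup>2) \<omega> \<le> K * (1 + (norm (x n \<omega>))\<^sup>2)"
    and x_rec: "\<And>n \<omega>. \<omega> \<in> space M \<Longrightarrow>
        x (Suc n) \<omega> = x n \<omega> + a n *\<^sub>R (h (x n \<omega>) (y n \<omega>) + Mn (Suc n) \<omega>)"
    and T_pos: "T > 0"
begin

sublocale st: stepsz a T using a_pos a_div a_le1 T_pos by unfold_locales auto
sublocale P: prob_space M by (rule prob)

lemma sub: "subalgebra M (F i)" using filt by (simp add: filtration_def)
lemma spF: "space (F i) = space M" using sub[of i] by (simp add: subalgebra_def)
lemma up: "f \<in> borel_measurable (F i) \<Longrightarrow> i \<le> j \<Longrightarrow> f \<in> borel_measurable (F j)"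
proof (erule measurable_from_subalg[rotated])
  assume "i \<le> j" then show "subalgebra (F j) (F i)"
    using filt spF by (simp add: filtration_def subalgebra_def)
qed
lemma toM: "f \<in> borel_measurable (F i) \<Longrightarrow> f \<in> borel_measurable M"
  by (rule measurable_from_subalg[OF sub])

lemma sfs: "sigma_finite_subalgebra M (F i)"
proof -
  have "finite_measure_subalgebra M (F i)"
    using sub[of i] P.finite_measure_axioms by (simp add: finite_measure_subalgebra_def finite_measure_subalgebra_axioms_def)
  then show ?thesis by (rule finite_measure_subalgebra_is_sigma_finite)
qed

lemma xF: "x k \<in> borel_measurable (F k)"
proof (induction k)
  case 0 then show ?case by (rule x0_meas)
next
  case (Suc k)
  have hm: "(\<lambda>\<omega>. h (x k \<omega>) (y k \<omega>)) \<in> borel_measurable (F (Suc k))"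
    by (rule meas_h[OF h_cont h_lip]) (auto intro: up[OF Suc] up[OF y_adapt] y_S simp: spF)
  have xk: "x k \<in> borel_measurable (F (Suc k))" by (rule up[OF Suc]) simp
  have "(\<lambda>\<omega>. x k \<omega> + a k *\<^sub>R (h (x k \<omega>) (y k \<omega>) + Mn (Suc k) \<omega>)) \<in> borel_measurable (F (Suc k))"
    using hm xk M_adapt[of k] by measurable
  then show ?case by (subst measurable_cong[where g="\<lambda>\<omega>. x k \<omega> + a k *\<^sub>R (h (x k \<omega>) (y k \<omega>) + Mn (Suc k) \<omega>)"])
      (auto simp: spF x_rec)
qed

definition "C0 = (SOME C. C \<ge> 0 \<and> (\<forall>v\<in>S. norm (h 0 v) \<le> C))"

lemma C0: "C0 \<ge> 0" "\<And>v. v \<in> S \<Longrightarrow> norm (h 0 v) \<le> C0"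
proof -
  have "continuous_on S (h 0)"
  proof -
    have "continuous_on S ((\<lambda>(u, v). h u v) \<circ> (\<lambda>v. (0, v)))"
      by (rule continuous_on_compose) (auto intro!: continuous_intros intro: continuous_on_subset[OF h_cont])
    then show ?thesis by (simp add: o_def)
  qed
  then have "compact (h 0 ` S)" using S_compact by (rule compact_continuous_image)
  then obtain B where "B > 0" "\<forall>z\<in>h 0 ` S. norm z \<le> B" using compact_imp_bounded bounded_pos by metis
  then have "\<exists>C. C \<ge> 0 \<and> (\<forall>v\<in>S. norm (h 0 v) \<le> C)" by (intro exI[of _ B]) auto
  then have "C0 \<ge> 0 \<and> (\<forall>v\<in>S. norm (h 0 v) \<le> C0)" unfolding C0_def by (rule someI_ex)
  then show "C0 \<ge> 0" "\<And>v. v \<in> S \<Longrightarrow> norm (h 0 v) \<le> C0" by auto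
qed

lemma hb: "v \<in> S \<Longrightarrow> norm (h u v) \<le> C0 + L * norm u"
  using h_lip[of v u 0] C0(2)[of v] norm_triangle_ineq2[of "h u v" "h 0 v"] by simp

definition "RR = (2 + C0 * (T + 1)) * exp (L * (T + 1))"
lemma RR_nn: "RR \<ge> 0" using C0 T_pos by (simp add: RR_def)

definition "rw n \<omega> = rr a T (\<lambda>k. x k \<omega>) n"
lemma rw_eq: "rw n \<omega> = max (norm (x (Nidx a T n) \<omega>)) 1" by (simp add: rw_def st.rr_eq)
lemma rw_ge1: "rw n \<omega> \<ge> 1" by (simp add: rw_eq)

definition "co n i \<omega> = (if norm (x i \<omega>) \<le> RR * rw n \<omega> then a i / rw n \<omega> else 0)"
definition "Dt n i \<omega> = co n i \<omega> *\<^sub>R Mn (Suc i) \<omega>"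

lemma rw_F: "Nidx a T n \<le> i \<Longrightarrow> rw n \<in> borel_measurable (F i)"
proof -
  assume "Nidx a T n \<le> i"
  then have [measurable]: "x (Nidx a T n) \<in> borel_measurable (F i)" by (intro up[OF xF])
  show ?thesis unfolding rw_eq[abs_def] by measurable
qed

lemma co_F: "Nidx a T n \<le> i \<Longrightarrow> co n i \<in> borel_measurable (F i)"
proof -
  assume "Nidx a T n \<le> i"
  then have [measurable]: "rw n \<in> borel_measurable (F i)" by (rule rw_F)
  have [measurable]: "x i \<in> borel_measurable (F i)" by (rule xF)
  show ?thesis unfolding co_def[abs_def] by measurable
qed

lemma co_nn: "co n i \<omega> \<ge> 0" using a_pos[of i] rw_ge1[of n \<omega>] by (simp add: co_def)
lemma co_le: "co n i \<omega> \<le> 1"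
proof -
  have "a i / rw n \<omega> \<le> a i" using a_pos[of i] rw_ge1[of n \<omega>] by (simp add: divide_le_eq mult_le_cancel_left1)
  then show ?thesis using a_le1[of i] by (simp add: co_def)
qed

lemma co_sq: "(co n i \<omega>)\<^sup>2 * (1 + (norm (x i \<omega>))\<^sup>2) \<le> (a i)\<^sup>2 * (1 + RR\<^sup>2)"
proof (cases "norm (x i \<omega>) \<le> RR * rw n \<omega>")
  case True
  let ?r = "rw n \<omega>"
  have r1: "?r \<ge> 1" by (rule rw_ge1)
  have "(co n i \<omega>)\<^sup>2 * (1 + (norm (x i \<omega>))\<^sup>2) = (a i)\<^sup>2 * (1 / ?r\<^sup>2 + (norm (x i \<omega>) / ?r)\<^sup>2)"
    using True r1 by (simp add: co_def field_simps power2_eq_square)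
  also have "\<dots> \<le> (a i)\<^sup>2 * (1 + RR\<^sup>2)"
  proof (intro mult_left_mono add_mono)
    show "1 / ?r\<^sup>2 \<le> 1" using r1 by (simp add: divide_le_eq one_le_power)
    have "norm (x i \<omega>) / ?r \<le> RR" using True r1 by (simp add: divide_le_eq mult.commute)
    then show "(norm (x i \<omega>) / ?r)\<^sup>2 \<le> RR\<^sup>2" using r1 by (intro power_mono) auto
  qed auto
  finally show ?thesis .
qed (auto simp: co_def)

lemma Dt_inner: "Dt n i \<omega> \<bullet> b = co n i \<omega> * (Mn (Suc i) \<omega> \<bullet> b)" by (simp add: Dt_def)

lemma MF[measurable]: "Mn (Suc i) \<in> borel_measurable M" by (rule toM[OF M_adapt])
lemma xM[measurable]: "x i \<in> borel_measurable M" by (rule toM[OF xF])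

lemma Dt_meas: "Nidx a T n \<le> i \<Longrightarrow> (\<lambda>\<omega>. Dt n i \<omega> \<bullet> b) \<in> borel_measurable (F (Suc i))"
proof -
  assume "Nidx a T n \<le> i"
  then have [measurable]: "co n i \<in> borel_measurable (F (Suc i))" by (intro up[OF co_F]) auto
  have [measurable]: "Mn (Suc i) \<in> borel_measurable (F (Suc i))" by (rule M_adapt)
  show ?thesis unfolding Dt_inner by measurable
qed

lemma co_M: "Nidx a T n \<le> i \<Longrightarrow> co n i \<in> borel_measurable M" by (rule toM[OF co_F])

lemma Dt_sq: "Nidx a T n \<le> i \<Longrightarrow> b \<in> Basis \<Longrightarrow> integrable M (\<lambda>\<omega>. (Dt n i \<omega> \<bullet> b)\<^sup>2)"
proof (rule Bochner_Integration.integrable_bound[OF M_sq_int[of i]])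
  assume i: "Nidx a T n \<le> i" and b: "b \<in> Basis"
  show "(\<lambda>\<omega>. (Dt n i \<omega> \<bullet> b)\<^sup>2) \<in> borel_measurable M" using toM[OF Dt_meas[OF i]] by measurable
  show "AE \<omega> in M. norm ((Dt n i \<omega> \<bullet> b)\<^sup>2) \<le> norm ((norm (Mn (Suc i) \<omega>))\<^sup>2)"
  proof (intro AE_I2)
    fix \<omega>
    have "\<bar>Dt n i \<omega> \<bullet> b\<bar> \<le> \<bar>Mn (Suc i) \<omega> \<bullet> b\<bar>"
      unfolding Dt_inner using co_nn[of n i \<omega>] co_le[of n i \<omega>]
      by (simp add: abs_mult mult_left_le_one_le)
    also have "\<dots> \<le> norm (Mn (Suc i) \<omega>)" using b by (rule Basis_le_norm)
    finally have "\<bar>Dt n i \<omega> \<bullet> b\<bar>\<^sup>2 \<le> (norm (Mn (Suc i) \<omega>))\<^sup>2" by (intro power_mono) auto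
    then show "norm ((Dt n i \<omega> \<bullet> b)\<^sup>2) \<le> norm ((norm (Mn (Suc i) \<omega>))\<^sup>2)" by simp
  qed
qed

lemma Dt_orth:
  assumes i: "Nidx a T n \<le> i" and b: "b \<in> Basis" and g: "g \<in> borel_measurable (F i)"
    and int: "integrable M (\<lambda>\<omega>. g \<omega> * (Dt n i \<omega> \<bullet> b))"
  shows "(\<integral>\<omega>. g \<omega> * (Dt n i \<omega> \<bullet> b) \<partial>M) = 0"
proof -
  interpret SF: sigma_finite_subalgebra M "F i" by (rule sfs)
  have eq: "g \<omega> * (Dt n i \<omega> \<bullet> b) = (g \<omega> * co n i \<omega>) * (Mn (Suc i) \<omega> \<bullet> b)" for \<omega>
    by (simp add: Dt_inner)
  have fm: "(\<lambda>\<omega>. g \<omega> * co n i \<omega>) \<in> borel_measurable (F i)" using g co_F[OF i] by measurable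
  have gm: "(\<lambda>\<omega>. Mn (Suc i) \<omega> \<bullet> b) \<in> borel_measurable M" by measurable
  have int2: "integrable M (\<lambda>\<omega>. (g \<omega> * co n i \<omega>) * (Mn (Suc i) \<omega> \<bullet> b))" using int by (simp add: eq)
  have "(\<integral>\<omega>. g \<omega> * (Dt n i \<omega> \<bullet> b) \<partial>M) = (\<integral>\<omega>. (g \<omega> * co n i \<omega>) * (Mn (Suc i) \<omega> \<bullet> b) \<partial>M)"
    by (simp add: eq)
  also have "\<dots> = (\<integral>\<omega>. (g \<omega> * co n i \<omega>) * real_cond_exp M (F i) (\<lambda>\<omega>. Mn (Suc i) \<omega> \<bullet> b) \<omega> \<partial>M)"
    by (rule SF.real_cond_exp_intg(2)[OF int2 fm gm, symmetric])
  also have "\<dots> = 0"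
    by (rule integral_eq_zero_AE) (use M_mds[OF b, of i] in auto)
  finally show ?thesis .
qed

lemma Dt_var:
  assumes i: "Nidx a T n \<le> i" and b: "b \<in> Basis"
  shows "(\<integral>\<omega>. (Dt n i \<omega> \<bullet> b)\<^sup>2 \<partial>M) \<le> (a i)\<^sup>2 * (\<bar>K\<bar> * (1 + RR\<^sup>2))"
proof -
  interpret SF: sigma_finite_subalgebra M "F i" by (rule sfs)
  have [measurable]: "co n i \<in> borel_measurable M" by (rule co_M[OF i])
  have cF: "(\<lambda>\<omega>. (co n i \<omega>)\<^sup>2) \<in> borel_measurable (F i)" using co_F[OF i] by measurable
  have Mm: "(\<lambda>\<omega>. (norm (Mn (Suc i) \<omega>))\<^sup>2) \<in> borel_measurable M" by measurable
  have iM: "integrable M (\<lambda>\<omega>. (co n i \<omega>)\<^sup>2 * (norm (Mn (Suc i) \<omega>))\<^sup>2)"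
  proof (rule Bochner_Integration.integrable_bound[OF M_sq_int[of i]])
    show "(\<lambda>\<omega>. (co n i \<omega>)\<^sup>2 * (norm (Mn (Suc i) \<omega>))\<^sup>2) \<in> borel_measurable M" by measurable
    show "AE \<omega> in M. norm ((co n i \<omega>)\<^sup>2 * (norm (Mn (Suc i) \<omega>))\<^sup>2) \<le> norm ((norm (Mn (Suc i) \<omega>))\<^sup>2)"
      using co_nn[of n i] co_le[of n i] by (intro AE_I2) (simp add: mult_left_le_one_le power_le_one)
  qed
  have B: "\<bar>(co n i \<omega>)\<^sup>2 * (K * (1 + (norm (x i \<omega>))\<^sup>2))\<bar> \<le> (a i)\<^sup>2 * (\<bar>K\<bar> * (1 + RR\<^sup>2))" for \<omega>
  proof -
    have "\<bar>(co n i \<omega>)\<^sup>2 * (K * (1 + (norm (x i \<omega>))\<^sup>2))\<bar> = \<bar>K\<bar> * ((co n i \<omega>)\<^sup>2 * (1 + (norm (x i \<omega>))\<^sup>2))"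
      by (simp add: abs_mult)
    also have "\<dots> \<le> \<bar>K\<bar> * ((a i)\<^sup>2 * (1 + RR\<^sup>2))" by (intro mult_left_mono co_sq) auto
    finally show ?thesis by (simp add: ac_simps)
  qed
  have iR: "integrable M (\<lambda>\<omega>. (co n i \<omega>)\<^sup>2 * (K * (1 + (norm (x i \<omega>))\<^sup>2)))"
  proof (rule Bochner_Integration.integrable_bound[where f="\<lambda>\<omega>. (a i)\<^sup>2 * (\<bar>K\<bar> * (1 + RR\<^sup>2))"])
    show "integrable M (\<lambda>\<omega>. (a i)\<^sup>2 * (\<bar>K\<bar> * (1 + RR\<^sup>2)))" by simp
    show "(\<lambda>\<omega>. (co n i \<omega>)\<^sup>2 * (K * (1 + (norm (x i \<omega>))\<^sup>2))) \<in> borel_measurable M" by measurable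
    show "AE \<omega> in M. norm ((co n i \<omega>)\<^sup>2 * (K * (1 + (norm (x i \<omega>))\<^sup>2))) \<le> norm ((a i)\<^sup>2 * (\<bar>K\<bar> * (1 + RR\<^sup>2)))"
      using B by (intro AE_I2) (simp del: abs_mult)
  qed
  have "(\<integral>\<omega>. (Dt n i \<omega> \<bullet> b)\<^sup>2 \<partial>M) \<le> (\<integral>\<omega>. (co n i \<omega>)\<^sup>2 * (norm (Mn (Suc i) \<omega>))\<^sup>2 \<partial>M)"
  proof (rule integral_mono[OF Dt_sq[OF i b] iM])
    fix \<omega>
    have "\<bar>Mn (Suc i) \<omega> \<bullet> b\<bar> \<le> norm (Mn (Suc i) \<omega>)" using b by (rule Basis_le_norm)
    then have "\<bar>Mn (Suc i) \<omega> \<bullet> b\<bar>\<^sup>2 \<le> (norm (Mn (Suc i) \<omega>))\<^sup>2" by (intro power_mono) auto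
    then have "(Mn (Suc i) \<omega> \<bullet> b)\<^sup>2 \<le> (norm (Mn (Suc i) \<omega>))\<^sup>2" by simp
    then show "(Dt n i \<omega> \<bullet> b)\<^sup>2 \<le> (co n i \<omega>)\<^sup>2 * (norm (Mn (Suc i) \<omega>))\<^sup>2"
      unfolding Dt_inner power_mult_distrib by (intro mult_left_mono) auto
  qed
  also have "\<dots> = (\<integral>\<omega>. (co n i \<omega>)\<^sup>2 * real_cond_exp M (F i) (\<lambda>\<omega>. (norm (Mn (Suc i) \<omega>))\<^sup>2) \<omega> \<partial>M)"
    by (rule SF.real_cond_exp_intg(2)[OF iM cF Mm, symmetric])
  also have "\<dots> \<le> (\<integral>\<omega>. (co n i \<omega>)\<^sup>2 * (K * (1 + (norm (x i \<omega>))\<^sup>2)) \<partial>M)"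
  proof (rule integral_mono_AE[OF SF.real_cond_exp_intg(1)[OF iM cF Mm] iR])
    show "AE \<omega> in M. (co n i \<omega>)\<^sup>2 * real_cond_exp M (F i) (\<lambda>\<omega>. (norm (Mn (Suc i) \<omega>))\<^sup>2) \<omega>
        \<le> (co n i \<omega>)\<^sup>2 * (K * (1 + (norm (x i \<omega>))\<^sup>2))"
      using M_var[of i] by eventually_elim (intro mult_left_mono, auto)
  qed
  also have "\<dots> \<le> (\<integral>\<omega>. (a i)\<^sup>2 * (\<bar>K\<bar> * (1 + RR\<^sup>2)) \<partial>M)"
    using B by (intro integral_mono iR) (auto simp del: abs_mult intro: abs_le_D1)
  also have "\<dots> = (a i)\<^sup>2 * (\<bar>K\<bar> * (1 + RR\<^sup>2))" by (simp add: P.prob_space)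
  finally show ?thesis .
qed

lemma block_bound:
  assumes \<epsilon>: "\<epsilon> > 0"
  shows "measure M {\<omega>\<in>space M. \<exists>m\<in>{Nidx a T n..Nidx a T (Suc n)}. \<epsilon> \<le> norm (\<Sum>i\<in>{Nidx a T n..<m}. Dt n i \<omega>)}
    \<le> (real DIM('b) ^ 3 * (\<bar>K\<bar> * (1 + RR\<^sup>2)) / \<epsilon>\<^sup>2) * (\<Sum>i\<in>{Nidx a T n..<Nidx a T (Suc n)}. (a i)\<^sup>2)"
proof -
  let ?N = "Nidx a T n" and ?N' = "Nidx a T (Suc n)"
  define d where "d = real DIM('b)"
  have d: "d > 0" by (simp add: d_def)
  define B where "B = \<bar>K\<bar> * (1 + RR\<^sup>2)"
  have NN': "?N \<le> ?N'" by (rule st.Nidx_mono) simp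
  define Eb where "Eb b = {\<omega>\<in>space M. \<exists>m\<in>{?N..?N'}. \<epsilon> / d \<le> \<bar>\<Sum>i\<in>{?N..<m}. Dt n i \<omega> \<bullet> b\<bar>}" for b
  have EbM: "Eb b \<in> sets M" if b: "b \<in> Basis" for b
    unfolding Eb_def
  proof (rule sets.sets_Collect_finite_Ex)
    fix m assume "m \<in> {?N..?N'}"
    have "(\<lambda>\<omega>. \<Sum>i\<in>{?N..<m}. Dt n i \<omega> \<bullet> b) \<in> borel_measurable M"
      by (intro borel_measurable_sum toM[OF Dt_meas]) auto
    then show "{\<omega>\<in>space M. \<epsilon> / d \<le> \<bar>\<Sum>i\<in>{?N..<m}. Dt n i \<omega> \<bullet> b\<bar>} \<in> sets M" by (rule sets_abs_ge)
  qed auto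
  have Ebb: "measure M (Eb b) \<le> B * d\<^sup>2 / \<epsilon>\<^sup>2 * (\<Sum>i\<in>{?N..<?N'}. (a i)\<^sup>2)" if b: "b \<in> Basis" for b
  proof -
    have "measure M (Eb b) \<le> (\<Sum>i\<in>{?N..<?N'}. \<integral>\<omega>. (Dt n i \<omega> \<bullet> b)\<^sup>2 \<partial>M) / (\<epsilon> / d)\<^sup>2"
      unfolding Eb_def
    proof (rule P.kolmogorov[where G=F and X="\<lambda>i \<omega>. Dt n i \<omega> \<bullet> b"])
      show "subalgebra M (F i)" for i by (rule sub)
      show "i \<le> j \<Longrightarrow> sets (F i) \<subseteq> sets (F j)" for i j using filt by (simp add: filtration_def)
      show "(\<lambda>\<omega>. Dt n i \<omega> \<bullet> b) \<in> borel_measurable (F (Suc i))" if "?N \<le> i" for i using that by (rule Dt_meas)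
      show "integrable M (\<lambda>\<omega>. (Dt n i \<omega> \<bullet> b)\<^sup>2)" if "?N \<le> i" for i using that b by (rule Dt_sq)
      show "(\<integral>\<omega>. g \<omega> * (Dt n i \<omega> \<bullet> b) \<partial>M) = 0"
        if "?N \<le> i" "g \<in> borel_measurable (F i)" "integrable M (\<lambda>\<omega>. g \<omega> * (Dt n i \<omega> \<bullet> b))" for i g
        using that(1) b that(2,3) by (rule Dt_orth)
      show "\<epsilon> / d > 0" using \<epsilon> d by simp
      show "?N \<le> ?N'" by (rule NN')
    qed
    also have "\<dots> \<le> (\<Sum>i\<in>{?N..<?N'}. (a i)\<^sup>2 * B) / (\<epsilon> / d)\<^sup>2"
      using Dt_var b unfolding B_def by (intro divide_right_mono sum_mono) auto
    also have "\<dots> = B * d\<^sup>2 / \<epsilon>\<^sup>2 * (\<Sum>i\<in>{?N..<?N'}. (a i)\<^sup>2)"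
      using d \<epsilon> by (simp add: sum_distrib_left sum_distrib_right field_simps power_divide)
    finally show ?thesis .
  qed
  have sub: "{\<omega>\<in>space M. \<exists>m\<in>{?N..?N'}. \<epsilon> \<le> norm (\<Sum>i\<in>{?N..<m}. Dt n i \<omega>)} \<subseteq> (\<Union>b\<in>Basis. Eb b)"
  proof
    fix \<omega> assume "\<omega> \<in> {\<omega>\<in>space M. \<exists>m\<in>{?N..?N'}. \<epsilon> \<le> norm (\<Sum>i\<in>{?N..<m}. Dt n i \<omega>)}"
    then obtain m where sp: "\<omega> \<in> space M" and m: "m \<in> {?N..?N'}" and le: "\<epsilon> \<le> norm (\<Sum>i\<in>{?N..<m}. Dt n i \<omega>)" by auto
    let ?Z = "\<Sum>i\<in>{?N..<m}. Dt n i \<omega>"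
    have "\<exists>b\<in>Basis. \<epsilon> / d \<le> \<bar>?Z \<bullet> b\<bar>"
    proof (rule ccontr)
      assume "\<not> ?thesis"
      then have "\<And>b. b \<in> Basis \<Longrightarrow> \<bar>?Z \<bullet> b\<bar> < \<epsilon> / d" by auto
      then have "(\<Sum>b\<in>(Basis::'b set). \<bar>?Z \<bullet> b\<bar>) < (\<Sum>b\<in>(Basis::'b set). \<epsilon> / d)"
        by (intro sum_strict_mono) auto
      also have "\<dots> = \<epsilon>" using d by (simp add: d_def)
      finally show False using norm_le_l1[of ?Z] le by simp
    qed
    then obtain b where b: "b \<in> Basis" "\<epsilon> / d \<le> \<bar>?Z \<bullet> b\<bar>" by blast
    then have "\<omega> \<in> Eb b" using sp m unfolding Eb_def inner_sum_left by blast
    then show "\<omega> \<in> (\<Union>b\<in>Basis. Eb b)" using b by blast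
  qed
  have "measure M {\<omega>\<in>space M. \<exists>m\<in>{?N..?N'}. \<epsilon> \<le> norm (\<Sum>i\<in>{?N..<m}. Dt n i \<omega>)} \<le> measure M (\<Union>b\<in>Basis. Eb b)"
    using sub EbM by (intro P.finite_measure_mono) auto
  also have "\<dots> \<le> (\<Sum>b\<in>Basis. measure M (Eb b))" using EbM by (intro measure_UNION_le) auto
  also have "\<dots> \<le> (\<Sum>b\<in>(Basis::'b set). B * d\<^sup>2 / \<epsilon>\<^sup>2 * (\<Sum>i\<in>{?N..<?N'}. (a i)\<^sup>2))"
    using Ebb by (intro sum_mono) auto
  also have "\<dots> = (real DIM('b) ^ 3 * (\<bar>K\<bar> * (1 + RR\<^sup>2)) / \<epsilon>\<^sup>2) * (\<Sum>i\<in>{?N..<?N'}. (a i)\<^sup>2)"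
    by (simp add: B_def d_def power3_eq_cube power2_eq_square)
  finally show ?thesis .
qed

lemma block_summable: "summable (\<lambda>n. \<Sum>i\<in>{Nidx a T n..<Nidx a T (Suc n)}. (a i)\<^sup>2)"
proof (rule summableI_nonneg_bounded[where x="suminf (\<lambda>i. (a i)\<^sup>2)"])
  show "0 \<le> (\<Sum>i\<in>{Nidx a T n..<Nidx a T (Suc n)}. (a i)\<^sup>2)" for n by (intro sum_nonneg) auto
  fix P
  have "(\<Sum>n<P. \<Sum>i\<in>{Nidx a T n..<Nidx a T (Suc n)}. (a i)\<^sup>2) = (\<Sum>i<Nidx a T P. (a i)\<^sup>2)"
  proof (induction P)
    case (Suc P)
    have "Nidx a T P \<le> Nidx a T (Suc P)" by (rule st.Nidx_mono) simp
    then show ?case using Suc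
      by (simp add: lessThan_atLeast0 sum.atLeastLessThan_concat)
  qed simp
  also have "\<dots> \<le> suminf (\<lambda>i. (a i)\<^sup>2)" by (intro sum_le_suminf a_sq) auto
  finally show "(\<Sum>n<P. \<Sum>i\<in>{Nidx a T n..<Nidx a T (Suc n)}. (a i)\<^sup>2) \<le> suminf (\<lambda>i. (a i)\<^sup>2)" .
qed

definition "Zw n m \<omega> = (\<Sum>i\<in>{Nidx a T n..<m}. Dt n i \<omega>)"

lemma AE_small:
  "AE \<omega> in M. \<forall>j::nat. eventually (\<lambda>n. \<forall>m\<in>{Nidx a T n..Nidx a T (Suc n)}. norm (Zw n m \<omega>) < 1 / real (Suc j)) sequentially"
proof (subst AE_all_countable, intro allI)
  fix j :: nat
  define \<epsilon> where "\<epsilon> = 1 / real (Suc j)"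
  have \<epsilon>: "\<epsilon> > 0" by (simp add: \<epsilon>_def)
  define A where "A n = {\<omega>\<in>space M. \<exists>m\<in>{Nidx a T n..Nidx a T (Suc n)}. \<epsilon> \<le> norm (\<Sum>i\<in>{Nidx a T n..<m}. Dt n i \<omega>)}" for n
  have AM: "A n \<in> sets M" for n
    unfolding A_def
  proof (rule sets.sets_Collect_finite_Ex)
    fix m assume "m \<in> {Nidx a T n..Nidx a T (Suc n)}"
    have "(\<lambda>\<omega>. norm (\<Sum>i\<in>{Nidx a T n..<m}. Dt n i \<omega>)) \<in> borel_measurable M"
    proof -
      have "(\<lambda>\<omega>. Dt n i \<omega>) \<in> borel_measurable M" if "i \<in> {Nidx a T n..<m}" for i
      proof -
        have [measurable]: "co n i \<in> borel_measurable M" using that by (intro co_M) auto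
        show ?thesis unfolding Dt_def by measurable
      qed
      then have [measurable]: "(\<lambda>\<omega>. \<Sum>i\<in>{Nidx a T n..<m}. Dt n i \<omega>) \<in> borel_measurable M"
        by (rule borel_measurable_sum)
      show ?thesis by measurable
    qed
    then have "{\<omega>\<in>space M. \<epsilon> \<le> \<bar>norm (\<Sum>i\<in>{Nidx a T n..<m}. Dt n i \<omega>)\<bar>} \<in> sets M" by (rule sets_abs_ge)
    then show "{\<omega>\<in>space M. \<epsilon> \<le> norm (\<Sum>i\<in>{Nidx a T n..<m}. Dt n i \<omega>)} \<in> sets M" by simp
  qed auto
  have "AE \<omega> in M. eventually (\<lambda>n. \<omega> \<in> space M - A n) sequentially"
  proof (rule borel_cantelli_AE1[OF AM])
    show "emeasure M (A n) < \<infinity>" for n by (simp add: P.emeasure_eq_measure)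
    define c where "c = real DIM('b) ^ 3 * (\<bar>K\<bar> * (1 + RR\<^sup>2)) / \<epsilon>\<^sup>2"
    show "summable (\<lambda>n. measure M (A n))"
    proof (rule summable_comparison_test[where g="\<lambda>n. c * (\<Sum>i\<in>{Nidx a T n..<Nidx a T (Suc n)}. (a i)\<^sup>2)"])
      show "\<exists>N. \<forall>n\<ge>N. norm (measure M (A n)) \<le> c * (\<Sum>i\<in>{Nidx a T n..<Nidx a T (Suc n)}. (a i)\<^sup>2)"
        using block_bound[OF \<epsilon>] unfolding A_def c_def by auto
      show "summable (\<lambda>n. c * (\<Sum>i\<in>{Nidx a T n..<Nidx a T (Suc n)}. (a i)\<^sup>2))"
        by (intro summable_mult block_summable)
    qed
  qed
  then show "AE \<omega> in M. eventually (\<lambda>n. \<forall>m\<in>{Nidx a T n..Nidx a T (Suc n)}. norm (Zw n m \<omega>) < 1 / real (Suc j)) sequentially"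
  proof (rule AE_mp, intro AE_I2 impI)
    fix \<omega> assume ev: "eventually (\<lambda>n. \<omega> \<in> space M - A n) sequentially"
    from ev show "eventually (\<lambda>n. \<forall>m\<in>{Nidx a T n..Nidx a T (Suc n)}. norm (Zw n m \<omega>) < 1 / real (Suc j)) sequentially"
      by (rule eventually_mono) (auto simp: A_def Zw_def \<epsilon>_def not_le)
  qed
qed

lemma main:
  "AE \<omega> in M. (\<lambda>n. SUP t\<in>{0..T}. norm (xn h a T (\<lambda>k. x k \<omega>) (\<lambda>k. y k \<omega>) n t
                                 - xhat_blk a T (\<lambda>k. x k \<omega>) n t)) \<longlonglongrightarrow> 0"
proof (rule AE_mp[OF AE_small], rule AE_I2, rule impI)
  fix \<omega> assume sp: "\<omega> \<in> space M"
    and H: "\<forall>j::nat. eventually (\<lambda>n. \<forall>m\<in>{Nidx a T n..Nidx a T (Suc n)}. norm (Zw n m \<omega>) < 1 / real (Suc j)) sequentially"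
  interpret gp: gpath a T h "\<lambda>k. x k \<omega>" "\<lambda>k. y k \<omega>" "\<lambda>k. Mn k \<omega>" C0 L
    by unfold_locales (auto simp: x_rec[OF sp] C0 hb y_S[OF sp] L_pos less_imp_le a_pos a_div a_le1 T_pos)
  have Zeq: "gp.Zt n m = Zw n m \<omega>" for n m
    unfolding gp.Zt_def Zw_def Dt_def co_def rw_def gp.RR_def RR_def by simp
  show "(\<lambda>n. SUP t\<in>{0..T}. norm (xn h a T (\<lambda>k. x k \<omega>) (\<lambda>k. y k \<omega>) n t
                                 - xhat_blk a T (\<lambda>k. x k \<omega>) n t)) \<longlonglongrightarrow> 0"
  proof (rule LIMSEQ_I)
    fix r :: real assume r: "0 < r"
    obtain k :: nat where k: "k > 0" "inverse (real k) < r" using ex_inverse_of_nat_less[OF r] by auto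
    define j where "j = k - 1"
    have jk: "real (Suc j) = real k" using k by (simp add: j_def)
    obtain no where no: "\<And>n. n \<ge> no \<Longrightarrow> \<forall>m\<in>{Nidx a T n..Nidx a T (Suc n)}. norm (Zw n m \<omega>) < 1 / real (Suc j)"
      using H[rule_format, of j] unfolding eventually_sequentially by blast
    have "norm ((SUP t\<in>{0..T}. norm (xn h a T (\<lambda>k. x k \<omega>) (\<lambda>k. y k \<omega>) n t
                                 - xhat_blk a T (\<lambda>k. x k \<omega>) n t)) - 0) < r" if n: "n \<ge> no" for n
    proof -
      let ?f = "\<lambda>t. norm (xn h a T (\<lambda>k. x k \<omega>) (\<lambda>k. y k \<omega>) n t - xhat_blk a T (\<lambda>k. x k \<omega>) n t)"
      have Zs1: "\<And>m. m \<in> {Nidx a T n..Nidx a T (Suc n)} \<Longrightarrow> norm (Zw n m \<omega>) < 1 / real (Suc j)" using no[OF n] by blast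
      have le1: "1 / real (Suc j) \<le> 1" by simp
      have Zt1: "norm (gp.Zt n m) \<le> 1" if "m \<in> {Nidx a T n..Nidx a T (Suc n)}" for m
        using Zs1[OF that] le1 unfolding Zeq by linarith
      have "\<And>m. m \<in> {Nidx a T n..Nidx a T (Suc n)} \<Longrightarrow> gp.Zs n m = gp.Zt n m"
        using gp.gron[OF Zt1] by blast
      then have ZsB: "\<And>m. m \<in> {Nidx a T n..Nidx a T (Suc n)} \<Longrightarrow> norm (gp.Zs n m) \<le> 1 / real (Suc j)"
        using Zs1 Zeq by (metis less_imp_le)
      have fb: "?f t \<le> 1 / real (Suc j)" if "t \<in> {0..T}" for t
        using that by (intro gp.window_bound ZsB) auto
      have ne: "{0..T} \<noteq> {}" using T_pos by simp
      have up: "(SUP t\<in>{0..T}. ?f t) \<le> 1 / real (Suc j)" by (rule cSUP_least[OF ne fb])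
      have lo: "0 \<le> (SUP t\<in>{0..T}. ?f t)"
      proof -
        have "?f 0 \<le> (SUP t\<in>{0..T}. ?f t)"
          using T_pos fb by (intro cSUP_upper bdd_aboveI2[where M="1 / real (Suc j)"]) auto
        then show ?thesis by (meson norm_ge_zero order_trans)
      qed
      have "1 / real (Suc j) < r" using k jk by (simp add: divide_inverse)
      then show ?thesis using up lo by simp
    qed
    then show "\<exists>no. \<forall>n\<ge>no. norm ((SUP t\<in>{0..T}. norm (xn h a T (\<lambda>k. x k \<omega>) (\<lambda>k. y k \<omega>) n t
                                 - xhat_blk a T (\<lambda>k. x k \<omega>) n t)) - 0) < r" by blast
  qed
qed

end


theorem lemma5:
  fixes M :: "'a measure" and F :: "nat \<Rightarrow> 'a measure"
    and S :: "'c::metric_space set"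
    and h :: "'b::euclidean_space \<Rightarrow> 'c \<Rightarrow> 'b"
    and a :: "nat \<Rightarrow> real" and L K T :: real
    and x :: "nat \<Rightarrow> 'a \<Rightarrow> 'b" and y :: "nat \<Rightarrow> 'a \<Rightarrow> 'c" and Mn :: "nat \<Rightarrow> 'a \<Rightarrow> 'b"
  assumes S_compact: "compact S"
    and h_cont: "continuous_on (UNIV \<times> S) (\<lambda>(u, v). h u v)"
    and L_pos: "L > 0"
    and h_lip: "\<And>u1 u2 v. v \<in> S \<Longrightarrow> norm (h u1 v - h u2 v) \<le> L * norm (u1 - u2)"
    and a_pos: "\<And>n. a n > 0"
    and a_div: "\<not> summable a"
    and a_sq: "summable (\<lambda>n. (a n)\<^sup>2)"
    and a_le1: "\<And>n. a n \<le> 1"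
    and prob: "prob_space M"
    and filt: "filtration M F"
    and y_S: "\<And>n \<omega>. \<omega> \<in> space M \<Longrightarrow> y n \<omega> \<in> S"
    and y_adapt: "\<And>n. y n \<in> borel_measurable (F n)"
    and x0_meas: "x 0 \<in> borel_measurable (F 0)"
    and M_adapt: "\<And>n. Mn (Suc n) \<in> borel_measurable (F (Suc n))"
    and M_sq_int: "\<And>n. integrable M (\<lambda>\<omega>. (norm (Mn (Suc n) \<omega>))\<^sup>2)"
    and M_mds: "\<And>n b. b \<in> Basis \<Longrightarrow>
        AE \<omega> in M. real_cond_exp M (F n) (\<lambda>\<omega>. Mn (Suc n) \<omega> \<bullet> b) \<omega> = 0"
    and M_var: "\<And>n. AE \<omega> in M.
        real_cond_exp M (F n) (\<lambda>\<omega>. (norm (Mn (Suc n) \<omega>))\<^sup>2) \<omega> \<le> K * (1 + (norm (x n \<omega>))\<^sup>2)"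
    and x_rec: "\<And>n \<omega>. \<omega> \<in> space M \<Longrightarrow>
        x (Suc n) \<omega> = x n \<omega> + a n *\<^sub>R (h (x n \<omega>) (y n \<omega>) + Mn (Suc n) \<omega>)"
    and T_pos: "T > 0"
  shows "AE \<omega> in M.
    (\<lambda>n. SUP t\<in>{0..T}. norm (xn h a T (\<lambda>k. x k \<omega>) (\<lambda>k. y k \<omega>) n t
                                 - xhat_blk a T (\<lambda>k. x k \<omega>) n t)) \<longlonglongrightarrow> 0"
    by (rule setting.main[OF setting.intro]) (fact assms)+

end
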